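(* Let $n\in\mathbb{N}$ and $\kappa,\kappa'\in\mathcal{K}_n$. Suppose that for some $\mu,\mu'\geq0$ and $0\leq\lambda,\lambda'\leq1$ we have for all $E\geq1$ $$|\kappa(Q,R,p,E)|\lesssim E^{-\mu}\min_{s\in[\lambda-1,1-\lambda]}\rho_{n,\lambda+s}(Q,E)\tilde\rho_{n,\lambda-s}(R,E),$$ $$|\kappa'(Q,R,p,E)|\lesssim E^{-\mu'}\min_{s\in[\lambda'-1,1-\lambda']}\rho_{n,\lambda'+s}(Q,E)\tilde\rho_{n,\lambda'-s}(R,E).$$ Then for all $0\leq\sigma\leq1$ satisfying $\max\{\lambda,\lambda'\}\leq\sigma<\lambda+\lambda'+n(1-\delta/\gamma)$, and with $\tau=\mu+\mu'+(\lambda+\lambda'+n(1-\delta/\gamma)-1)_+$, we have for $E\geq1$ $$|\kappa H_0^{-1}\star_n\kappa'|(Q,R,p,E)\lesssim E^{-\tau}\min_{s\in[\sigma-1,1-\sigma]}\rho_{n,\sigma+s}(Q,E)\tilde\rho_{n,\sigma-s}(R,E).$$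
   Context: Standing assumptions: $d\in\mathbb{N}$; $v:\mathbb{R}^d\to\mathbb{R}$, $\omega,\Omega:\mathbb{R}^d\to[0,\infty)$ rotation invariant; $\alpha<d/2$, $\gamma\in\{1,2\}$, $\delta:=d-2\alpha-\gamma<\gamma$; constants $C>0,c_b>0,c_p\geq0$ with $\Omega\in C^\gamma$, $|v(k)|\leq C|k|^{-\alpha}$, $\omega(k)\geq C(c_b+k^2)^{\gamma/2}$, $\Omega(p)\geq C(c_p+p^2)^{\gamma/2}$, $|\partial^\nu\Omega(p)|\leq C(c_p+p^2)^{(\gamma-|\nu|)/2}$ for $|\nu|\in\{1,\gamma\}$. $\lesssim$: inequality up to a constant independent of all variables; $x_+:=\max\{x,0\}$. Notation: for $X\in(\mathbb{R}^d)^n$, $X_a^b:=(x_a,\dots,x_b)$, $\omega(X_a^b):=\sum_{j=a}^b\omega(x_j)$; $X_J$ for a permutation $J=(j_1,\dots,j_n)$ is $(x_{j_1},\dots,x_{j_n})$. $\rho_{n,\lambda}(Q,E)=\Big(\prod_{j=1}^{n-1}\frac{|v(q_j)|}{E+\omega(Q_j^n)}\Big)\frac{|v(q_n)|}{(E+\omega(q_n))^{(1+\lambda)/2}}$, $\tilde\rho_{n,\lambda}(R,E)=\frac{|v(r_1)|}{(E+\omega(r_1))^{(1+\lambda)/2}}\prod_{j=2}^n\frac{|v(r_j)|}{E+\omega(R_1^j)}$. Kernels: an $n$-variable kernel is a locally square integrable $\kappa(Q,R,p,E)$, $Q,R\in\mathbb{R}^{nd}$, $p\in\mathbb{R}^d$,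 $E>0$; $\mathcal{K}_n$: such kernels with $|\kappa(Q,R,p,E)|\lesssim\min_{s\in[-1,1]}\rho_{n,s}(Q,E)\tilde\rho_{n,-s}(R,E)$. Full contraction product: $(\kappa H_0^{-1}\star_n\kappa')(Q,R,p,E)=\sum_{J}\int_{\mathbb{R}^{nd}}\frac{\kappa(Q,\Xi,p,E)\,\kappa'(U,R,p,E)}{\Omega(p+\sum_{i=1}^n\xi_i)+E+\omega(\Xi)}\mathrm{d}\Xi$, the sum running over all permutations $J=(j_1,\dots,j_n)$ of $\{1,\dots,n\}$ and $U\in\mathbb{R}^{nd}$ defined by $U_J=\Xi$. *)

theory Defs
  imports "HOL-Analysis.Analysis" "HOL-Combinatorics.Permutations"
begin

(* Points of R^d are vectors of type real^'d (d = CARD('d)).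
   Points of R^{nd} are functions X :: nat => real^'d, where only the
   components X 0, ..., X (n-1) matter (0-based indexing: x_j of the paper
   is X (j-1)). *)

definition partial_deriv :: "'d::finite \<Rightarrow> (real^'d \<Rightarrow> real) \<Rightarrow> real^'d \<Rightarrow> real" where
  "partial_deriv i f p = deriv (\<lambda>t. f (p + t *\<^sub>R axis i 1)) 0"

definition has_cont_partials :: "(real^'d::finite \<Rightarrow> real) \<Rightarrow> bool" where
  "has_cont_partials f \<longleftrightarrow>
     (\<forall>i p. (\<lambda>t. f (p + t *\<^sub>R axis i 1)) differentiable (at 0)) \<and>
     (\<forall>i. continuous_on UNIV (partial_deriv i f))"

definition C_k :: "nat \<Rightarrow> (real^'d::finite \<Rightarrow> real) \<Rightarrow> bool" where
  "C_k k f \<longleftrightarrow> has_cont_partials f \<and>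
     (k = 2 \<longrightarrow> (\<forall>i. has_cont_partials (partial_deriv i f)))"

definition rotation_invariant :: "(real^'d::finite \<Rightarrow> 'b) \<Rightarrow> bool" where
  "rotation_invariant f \<longleftrightarrow> (\<forall>g k. orthogonal_transformation g \<longrightarrow> f (g k) = f k)"

definition standing_assumptions ::
  "(real^'d::finite \<Rightarrow> real) \<Rightarrow> (real^'d \<Rightarrow> real) \<Rightarrow> (real^'d \<Rightarrow> real) \<Rightarrow> real \<Rightarrow> nat \<Rightarrow> bool" where
  "standing_assumptions v \<omega> \<Omega> \<alpha> \<gamma> \<longleftrightarrow>
     (\<forall>k. \<omega> k \<ge> 0) \<and> (\<forall>k. \<Omega> k \<ge> 0) \<and>
     rotation_invariant v \<and> rotation_invariant \<omega> \<and> rotation_invariant \<Omega> \<and>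
     \<alpha> < real CARD('d) / 2 \<and> \<gamma> \<in> {1, 2} \<and>
     real CARD('d) - 2 * \<alpha> - real \<gamma> < real \<gamma> \<and>
     C_k \<gamma> \<Omega> \<and>
     (\<exists>C cb cp. C > 0 \<and> cb > 0 \<and> cp \<ge> 0 \<and>
        (\<forall>k. (k \<noteq> 0 \<or> \<alpha> \<le> 0) \<longrightarrow>
              \<bar>v k\<bar> \<le> C * (if k = 0 \<and> \<alpha> = 0 then 1 else norm k powr (- \<alpha>))) \<and>
        (\<forall>k. \<omega> k \<ge> C * sqrt (cb + (norm k)\<^sup>2) ^ \<gamma>) \<and>
        (\<forall>p. \<Omega> p \<ge> C * sqrt (cp + (norm p)\<^sup>2) ^ \<gamma>) \<and>
        (\<forall>i p. \<bar>partial_deriv i \<Omega> p\<bar> \<le> C * sqrt (cp + (norm p)\<^sup>2) ^ (\<gamma> - 1)) \<and>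
        (\<gamma> = 2 \<longrightarrow> (\<forall>i j p. \<bar>partial_deriv i (partial_deriv j \<Omega>) p\<bar> \<le> C)))"

definition delta :: "real \<Rightarrow> nat \<Rightarrow> 'd::finite itself \<Rightarrow> real" where
  "delta \<alpha> \<gamma> _ = real CARD('d) - 2 * \<alpha> - real \<gamma>"

(* \<omega>(X_a^b) = \<Sum>_{j=a}^b \<omega>(x_j), 1-based in the paper; here 0-based. *)

definition rho :: "(real^'d::finite \<Rightarrow> real) \<Rightarrow> (real^'d \<Rightarrow> real) \<Rightarrow> nat \<Rightarrow> real
                    \<Rightarrow> (nat \<Rightarrow> real^'d) \<Rightarrow> real \<Rightarrow> real" where
  "rho v \<omega> n l Q E =
     (\<Prod>j<n-1. \<bar>v (Q j)\<bar> / (E + (\<Sum>i=j..n-1. \<omega> (Q i)))) *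
     (\<bar>v (Q (n-1))\<bar> / (E + \<omega> (Q (n-1))) powr ((1 + l) / 2))"

definition rho_tilde :: "(real^'d::finite \<Rightarrow> real) \<Rightarrow> (real^'d \<Rightarrow> real) \<Rightarrow> nat \<Rightarrow> real
                    \<Rightarrow> (nat \<Rightarrow> real^'d) \<Rightarrow> real \<Rightarrow> real" where
  "rho_tilde v \<omega> n l R E =
     (\<bar>v (R 0)\<bar> / (E + \<omega> (R 0)) powr ((1 + l) / 2)) *
     (\<Prod>j\<in>{1..<n}. \<bar>v (R j)\<bar> / (E + (\<Sum>i=0..j. \<omega> (R i))))"

(* Lebesgue measure on R^{nd}, realised on extensional functions {..<n} -> R^d *)
definition Rnd :: "nat \<Rightarrow> (nat \<Rightarrow> real^'d::finite) measure" where
  "Rnd n = PiM {..<n} (\<lambda>_. lborel)"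

type_synonym 'd kernel =
  "(nat \<Rightarrow> real^'d) \<Rightarrow> (nat \<Rightarrow> real^'d) \<Rightarrow> real^'d \<Rightarrow> real \<Rightarrow> complex"

definition locally_square_integrable :: "nat \<Rightarrow> 'd::finite kernel \<Rightarrow> bool" where
  "locally_square_integrable n \<kappa> \<longleftrightarrow>
     (\<forall>p E. E > 0 \<longrightarrow>
        (\<lambda>(Q, R). \<kappa> Q R p E) \<in> borel_measurable (Rnd n \<Otimes>\<^sub>M Rnd n) \<and>
        (\<forall>r::real. (\<integral>\<^sup>+ (Q, R) \<in> {(Q, R). \<forall>i<n. norm (Q i) \<le> r \<and> norm (R i) \<le> r}.
                 ennreal ((cmod (\<kappa> Q R p E))\<^sup>2) \<partial>(Rnd n \<Otimes>\<^sub>M Rnd n)) < \<infinity>))"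

definition kernel_class :: "(real^'d::finite \<Rightarrow> real) \<Rightarrow> (real^'d \<Rightarrow> real) \<Rightarrow> nat
                             \<Rightarrow> 'd kernel set" where
  "kernel_class v \<omega> n = {\<kappa>. locally_square_integrable n \<kappa> \<and>
     (\<exists>c. \<forall>Q R p E. E > 0 \<longrightarrow>
        cmod (\<kappa> Q R p E) \<le> c * (INF s\<in>{-1..1}. rho v \<omega> n s Q E * rho_tilde v \<omega> n (- s) R E))}"

(* full contraction product  \<kappa> H_0^{-1} \<star>_n \<kappa>' ; for a permutation J of {..<n},
   U with U_J = \<Xi> is  U k = \<Xi> (inv J k). *)
definition full_contraction ::
  "(real^'d::finite \<Rightarrow> real) \<Rightarrow> (real^'d \<Rightarrow> real) \<Rightarrow> nat \<Rightarrow> 'd kernel \<Rightarrow> 'd kernel \<Rightarrow> 'd kernel" where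
  "full_contraction \<omega> \<Omega> n \<kappa> \<kappa>' Q R p E =
     (\<Sum>J\<in>{J. J permutes {..<n}}.
        \<integral>\<Xi>. \<kappa> Q \<Xi> p E * \<kappa>' (\<lambda>k. \<Xi> (inv J k)) R p E /
             complex_of_real (\<Omega> (p + (\<Sum>i<n. \<Xi> i)) + E + (\<Sum>i<n. \<omega> (\<Xi> i))) \<partial>Rnd n)"

end

theory Submission
  imports Defs
begin

lemma powr_neg_le_one: "1 \<le> (x::real) \<Longrightarrow> 0 \<le> a \<Longrightarrow> x powr (-a) \<le> 1"
  by (metis neg_le_0_iff_le not_one_le_zero powr_mono powr_zero_eq_one)

lemma le_sum_fin: "(a::ennreal) \<le> ennreal x + ennreal y \<Longrightarrow> a < \<infinity>"
  by (simp add: order.strict_trans1)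

lemma nn_integral_sym_split:
  fixes g :: "real \<Rightarrow> ennreal"
  assumes [measurable]: "g \<in> borel_measurable borel"
  shows "(\<integral>\<^sup>+t. g t \<partial>lborel) \<le> (\<integral>\<^sup>+t. g t * indicator {0..} t \<partial>lborel) + (\<integral>\<^sup>+t. g (-t) * indicator {0..} t \<partial>lborel)"
proof -
  have "(\<integral>\<^sup>+t. g t \<partial>lborel) \<le> (\<integral>\<^sup>+t. g t * indicator {0..} t + g t * indicator {..0} t \<partial>lborel)"
    by (intro nn_integral_mono) (auto split: split_indicator)
  also have "\<dots> = (\<integral>\<^sup>+t. g t * indicator {0..} t \<partial>lborel) + (\<integral>\<^sup>+t. g t * indicator {..0} t \<partial>lborel)"
    by (intro nn_integral_add) auto
  also have "(\<integral>\<^sup>+t. g t * indicator {..0} t \<partial>lborel) = (\<integral>\<^sup>+t. g (-t) * indicator {0..} t \<partial>lborel)"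
    by (subst nn_integral_real_affine[where c="-1" and t=0]) (auto split: split_indicator intro!: nn_integral_cong)
  finally show ?thesis by simp
qed

lemma nn_integral_powr_01:
  fixes p :: real assumes "p < 1"
  shows "(\<integral>\<^sup>+t. ennreal (t powr (-p)) * indicator {0..1} t \<partial>lborel) = ennreal (1 / (1 - p))"
proof -
  have "((\<lambda>t. t powr (-p)) has_integral (1 powr (-p+1) / (-p+1))) {0..1}"
    by (rule has_integral_powr_from_0) (use assms in auto)
  then have "((\<lambda>t. t powr (-p)) has_integral (1 / (1 - p))) {0..1}" by simp
  then show ?thesis by (intro nn_integral_has_integral_lebesgue') auto
qed

lemma nn_integral_powr_1inf:
  fixes q :: real assumes "q > 1"
  shows "(\<integral>\<^sup>+t. ennreal (t powr (-q)) * indicator {1..} t \<partial>lborel) = ennreal (1 / (q - 1))"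
proof -
  have "((\<lambda>t. t powr (-q)) has_integral (-(1 powr (-q+1)) / (-q+1))) {1..}"
    by (rule has_integral_powr_to_inf) (use assms in auto)
  moreover have "- (1 / (1 - q)) = 1 / (q - 1)"
    by (metis minus_diff_eq divide_minus_right)
  ultimately have "((\<lambda>t. t powr (-q)) has_integral (1 / (q - 1))) {1..}"
    by simp
  then show ?thesis by (intro nn_integral_has_integral_lebesgue') auto
qed

lemma fin1a:
  fixes p :: real assumes "p < 1"
  shows "(\<integral>\<^sup>+t. ennreal (\<bar>t\<bar> powr (-p)) * indicator {-1..1} t \<partial>lborel) < \<infinity>"
proof -
  let ?g = "\<lambda>t. ennreal (\<bar>t\<bar> powr (-p)) * indicator {-1..1} t"
  have "(\<integral>\<^sup>+t. ?g t \<partial>lborel) \<le> (\<integral>\<^sup>+t. ?g t * indicator {0..} t \<partial>lborel) + (\<integral>\<^sup>+t. ?g (-t) * indicator {0..} t \<partial>lborel)"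
    by (rule nn_integral_sym_split) auto
  also have "(\<integral>\<^sup>+t. ?g t * indicator {0..} t \<partial>lborel) = (\<integral>\<^sup>+t. ennreal (t powr (-p)) * indicator {0..1} t \<partial>lborel)"
    by (intro nn_integral_cong) (auto split: split_indicator)
  also have "(\<integral>\<^sup>+t. ?g (-t) * indicator {0..} t \<partial>lborel) = (\<integral>\<^sup>+t. ennreal (t powr (-p)) * indicator {0..1} t \<partial>lborel)"
    by (intro nn_integral_cong) (auto split: split_indicator)
  finally show ?thesis using nn_integral_powr_01[OF assms]
    by (intro le_sum_fin) simp
qed

lemma fin1b:
  fixes q :: real assumes "q > 1/2"
  shows "(\<integral>\<^sup>+t. ennreal ((1 + t\<^sup>2) powr (-q)) \<partial>lborel) < \<infinity>"
proof -
  let ?g = "\<lambda>t::real. ennreal ((1 + t\<^sup>2) powr (-q))"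
  have pt: "?g t * indicator {0..} t \<le> indicator {0..<1} t + ennreal (t powr (-(2*q))) * indicator {1..} t" for t
  proof (cases "t \<ge> 0")
    case True
    show ?thesis
    proof (cases "t < 1")
      case True
      have "(1 + t\<^sup>2) powr (-q) \<le> 1"
        using assms by (intro powr_neg_le_one) auto
      then show ?thesis using \<open>t \<ge> 0\<close> True by (auto split: split_indicator)
    next
      case False
      have "(1 + t\<^sup>2) powr (-q) \<le> (t\<^sup>2) powr (-q)"
        using assms False by (intro powr_mono2') auto
      also have "(t\<^sup>2) powr (-q) = t powr (-(2*q))"
      proof -
        have "t\<^sup>2 = t powr 2" using False by (simp add: powr_numeral)
        then show ?thesis by (simp add: powr_powr)
      qed
      finally show ?thesis using False \<open>t \<ge> 0\<close> by (auto split: split_indicator)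
    qed
  qed auto
  have "(\<integral>\<^sup>+t. ?g t \<partial>lborel) \<le> (\<integral>\<^sup>+t. ?g t * indicator {0..} t \<partial>lborel) + (\<integral>\<^sup>+t. ?g (-t) * indicator {0..} t \<partial>lborel)"
    by (rule nn_integral_sym_split) auto
  also have "(\<integral>\<^sup>+t. ?g (-t) * indicator {0..} t \<partial>lborel) = (\<integral>\<^sup>+t. ?g t * indicator {0..} t \<partial>lborel)"
    by simp
  also have "(\<integral>\<^sup>+t. ?g t * indicator {0..} t \<partial>lborel) \<le> (\<integral>\<^sup>+t. indicator {0..<1} t + ennreal (t powr (-(2*q))) * indicator {1..} t \<partial>lborel)"
    by (intro nn_integral_mono pt)
  also have "\<dots> = (\<integral>\<^sup>+t. indicator {0..<1::real} t \<partial>lborel) + (\<integral>\<^sup>+t. ennreal (t powr (-(2*q))) * indicator {1..} t \<partial>lborel)"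
    by (rule nn_integral_add) auto
  also have "\<dots> = ennreal 1 + ennreal (1 / (2*q - 1))"
    using nn_integral_powr_1inf[of "2*q"] assms by simp
  finally have "(\<integral>\<^sup>+t. ?g t \<partial>lborel) \<le> (ennreal 1 + ennreal (1 / (2*q - 1))) + (ennreal 1 + ennreal (1 / (2*q - 1)))"
    by (simp add: add_mono)
  moreover have "(ennreal 1 + ennreal (1 / (2*q - 1))) + (ennreal 1 + ennreal (1 / (2*q - 1))) < \<infinity>"
    by simp
  ultimately show ?thesis by (rule le_less_trans)
qed


lemma powr_split_dim:
  assumes "0 < (y::real)" "0 < n" shows "(y powr (a / real n)) ^ n = y powr a"
proof -
  have "(y powr (a / real n)) ^ n = (y powr (a / real n)) powr (real n)"
    using assms by (simp add: powr_realpow)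
  also have "\<dots> = y powr a" using assms by (simp add: powr_powr)
  finally show ?thesis .
qed

lemma AE_coords_nonzero:
  "AE x in (lborel::'a::euclidean_space measure). \<forall>b\<in>Basis. x \<bullet> b \<noteq> 0"
proof (rule eventually_ball_finite)
  show "finite (Basis::'a set)" by simp
  show "\<forall>b\<in>(Basis::'a set). AE x in lborel. x \<bullet> b \<noteq> 0"
  proof
    fix b :: 'a assume b: "b \<in> Basis"
    have neg: "negligible {x::'a. x \<bullet> b = 0}"
      using negligible_standard_hyperplane[OF b, of 0] by simp
    have cl: "closed {x::'a. x \<bullet> b = 0}"
      using closed_hyperplane[of b 0] by (simp add: inner_commute)
    have "{x::'a. x \<bullet> b = 0} \<in> null_sets lborel"
      using neg cl by (auto simp: null_sets_completion_iff negligible_iff_null_sets)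
    then show "AE x in lborel. x \<bullet> b \<noteq> 0"
      by (rule AE_I') auto
  qed
qed

lemma sing_bound:
  fixes x :: "'a::euclidean_space" and a :: real
  assumes a: "a \<ge> 0" and nz: "\<forall>b\<in>Basis. x \<bullet> b \<noteq> 0" and x1: "norm x < 1"
  shows "norm x powr (-a) \<le> (\<Prod>b\<in>Basis. \<bar>x \<bullet> b\<bar> powr (-a / DIM('a)) * indicator {-1..1} (x \<bullet> b))"
proof -
  have xpos: "norm x > 0" using nz SOME_Basis by (metis inner_zero_left zero_less_norm_iff)
  have "norm x powr (-a) = (\<Prod>b\<in>(Basis::'a set). norm x powr (-a / DIM('a)))"
    using powr_split_dim[OF xpos DIM_positive[where 'a='a], of "-a"] by (simp add: prod_constant)
  also have "\<dots> \<le> (\<Prod>b\<in>Basis. \<bar>x \<bullet> b\<bar> powr (-a / DIM('a)) * indicator {-1..1} (x \<bullet> b))"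
  proof (intro prod_mono conjI)
    fix b :: 'a assume b: "b \<in> Basis"
    have le: "\<bar>x \<bullet> b\<bar> \<le> norm x" using b by (rule Basis_le_norm)
    then have "\<bar>x \<bullet> b\<bar> \<le> 1" using x1 by simp
    then have ind: "indicator {-1..1} (x \<bullet> b) = (1::real)" by (auto simp: indicator_def)
    show "0 \<le> norm x powr (-a / DIM('a))" by simp
    show "norm x powr (-a / DIM('a)) \<le> \<bar>x \<bullet> b\<bar> powr (-a / DIM('a)) * indicator {-1..1} (x \<bullet> b)"
      unfolding ind using a le nz b by (auto intro!: powr_mono2' simp: divide_nonpos_nonneg)
  qed
  finally show ?thesis .
qed

lemma tail_bound:
  fixes x :: "'a::euclidean_space" and s :: real
  assumes s: "s \<ge> 0"
  shows "(1 + (norm x)\<^sup>2) powr (-s) \<le> (\<Prod>b\<in>Basis. (1 + (x \<bullet> b)\<^sup>2) powr (-s / DIM('a)))"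
proof -
  have "(1 + (norm x)\<^sup>2) powr (-s) = (\<Prod>b\<in>(Basis::'a set). (1 + (norm x)\<^sup>2) powr (-s / DIM('a)))"
    using powr_split_dim[of "1 + (norm x)\<^sup>2" "DIM('a)" "-s"] by (simp add: prod_constant add_pos_nonneg)
  also have "\<dots> \<le> (\<Prod>b\<in>Basis. (1 + (x \<bullet> b)\<^sup>2) powr (-s / DIM('a)))"
  proof (intro prod_mono conjI)
    fix b :: 'a assume b: "b \<in> Basis"
    have le: "\<bar>x \<bullet> b\<bar> \<le> norm x" using b by (rule Basis_le_norm)
    then have "(x \<bullet> b)\<^sup>2 \<le> (norm x)\<^sup>2"
      by (metis abs_le_square_iff abs_norm_cancel)
    then show "(1 + (norm x)\<^sup>2) powr (-s / DIM('a)) \<le> (1 + (x \<bullet> b)\<^sup>2) powr (-s / DIM('a))"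
      using s by (intro powr_mono2') (auto simp: divide_nonpos_nonneg add_pos_nonneg)
  qed simp
  finally show ?thesis .
qed


lemma lower_gamma:
  fixes r C :: real and \<gamma> :: nat
  assumes r: "r \<ge> 0" and C: "C > 0" and g: "\<gamma> \<in> {1,2}"
  shows "min 1 C * (1 + r\<^sup>2) powr (real \<gamma> / 2) \<le> 1 + C * r ^ \<gamma>"
proof (cases "\<gamma> = 1")
  case True
  have "(1 + r\<^sup>2) powr (1 / 2) = sqrt (1 + r\<^sup>2)"
    by (simp add: powr_half_sqrt add_pos_nonneg)
  also have "\<dots> \<le> 1 + r"
    using r by (intro real_le_lsqrt) (auto simp: power2_eq_square algebra_simps)
  finally have "min 1 C * (1 + r\<^sup>2) powr (1 / 2) \<le> min 1 C * (1 + r)"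
    by (intro mult_left_mono) (use C in auto)
  also have "\<dots> \<le> 1 + C * r"
    using r C mult_right_mono[of 1 C r] by (auto simp: min_def algebra_simps)
  finally show ?thesis using True by simp
next
  case False
  then have g2: "\<gamma> = 2" using g by auto
  have "(1 + r\<^sup>2) powr (real 2 / 2) = 1 + r\<^sup>2"
    by (simp add: add_pos_nonneg)
  moreover have "min 1 C * (1 + r\<^sup>2) \<le> 1 + C * r\<^sup>2"
    using C mult_right_mono[of 1 C "r\<^sup>2"] by (auto simp: min_def algebra_simps)
  ultimately show ?thesis using g2 by simp
qed

lemma decay_gamma:
  fixes r C e :: real and \<gamma> :: nat
  assumes r: "r \<ge> 0" and C: "C > 0" and g: "\<gamma> \<in> {1,2}" and e: "e \<ge> 0"
  shows "(1 + C * r ^ \<gamma>) powr (-e) \<le> min 1 C powr (-e) * (1 + r\<^sup>2) powr (- (real \<gamma> * e / 2))"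
proof -
  have p1: "1 + r\<^sup>2 > 0" by (simp add: add_pos_nonneg)
  have pos: "0 < min 1 C * (1 + r\<^sup>2) powr (real \<gamma> / 2)"
    using C p1 by (intro mult_pos_pos) auto
  have "(1 + C * r ^ \<gamma>) powr (-e) \<le> (min 1 C * (1 + r\<^sup>2) powr (real \<gamma> / 2)) powr (-e)"
    using e pos lower_gamma[OF r C g] by (intro powr_mono2') auto
  also have "\<dots> = min 1 C powr (-e) * (1 + r\<^sup>2) powr (- (real \<gamma> * e / 2))"
    using C by (simp add: powr_mult powr_powr add_pos_nonneg)
  finally show ?thesis .
qed

lemma sing_powr_bound:
  fixes r a :: real
  assumes r: "r \<ge> 0" and cond: "a \<le> 0 \<or> r \<ge> 1"
  shows "r powr (-2*a) \<le> 2 powr \<bar>a\<bar> * (1 + r\<^sup>2) powr (-a)"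
proof (cases "r = 0")
  case True then show ?thesis by simp
next
  case False
  then have rp: "r > 0" using r by simp
  have eq: "r powr (-2*a) = (r\<^sup>2) powr (-a)"
    using rp by (simp add: powr_powr flip: powr_numeral)
  show ?thesis
  proof (cases "a \<le> 0")
    case True
    have "(r\<^sup>2) powr (-a) \<le> (1 + r\<^sup>2) powr (-a)"
      using True by (intro powr_mono2) auto
    also have "\<dots> \<le> 2 powr \<bar>a\<bar> * (1 + r\<^sup>2) powr (-a)"
    proof -
      have h: "1 \<le> 2 powr \<bar>a\<bar>" by (rule ge_one_powr_ge_zero) auto
      show ?thesis using mult_right_mono[OF h, of "(1 + r\<^sup>2) powr (-a)"] by simp
    qed
    finally show ?thesis using eq by simp
  next
    case False
    then have r1: "r \<ge> 1" and ap: "a > 0" using cond by auto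
    have "r\<^sup>2 \<ge> (1 + r\<^sup>2) / 2"
      using r1 mult_mono[of 1 r 1 r] by (simp add: power2_eq_square)
    then have "(r\<^sup>2) powr (-a) \<le> ((1 + r\<^sup>2) / 2) powr (-a)"
      using ap by (intro powr_mono2') (auto simp: add_pos_nonneg)
    also have "\<dots> = 2 powr \<bar>a\<bar> * (1 + r\<^sup>2) powr (-a)"
      using ap by (simp add: powr_divide add_pos_nonneg powr_minus_divide divide_simps)
    finally show ?thesis using eq by simp
  qed
qed


lemma G_fin:
  fixes \<alpha> e0 C :: real and \<gamma> :: nat
  assumes \<alpha>: "2*\<alpha> < DIM('a::euclidean_space)" and C: "C > 0" and e0: "e0 \<ge> 0" and g: "\<gamma> \<in> {1,2}"
    and big: "real \<gamma> * e0 > DIM('a) - 2*\<alpha>"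
  shows "(\<integral>\<^sup>+\<eta>. ennreal (norm (\<eta>::'a) powr (-2*\<alpha>) * (1 + C * norm \<eta> ^ \<gamma>) powr (-e0)) \<partial>lborel) < \<infinity>"
proof -
  define D where "D = real DIM('a)"
  have Dpos: "D > 0" by (simp add: D_def)
  define s where "s = \<alpha> + real \<gamma> * e0 / 2"
  have s_big: "s / D > 1/2" using big Dpos by (simp add: s_def D_def field_simps)
  have s_nn: "s \<ge> 0" using big Dpos unfolding s_def D_def by linarith
  define K where "K = 2 powr \<bar>\<alpha>\<bar> * min 1 C powr (-e0)"
  have K_nn: "K \<ge> 0" by (simp add: K_def)
  define f1 where "f1 = (\<lambda>(b::'a) (t::real). \<bar>t\<bar> powr (-(2*\<alpha>)/D) * indicator {-1..1} t)"
  define f2 where "f2 = (\<lambda>(b::'a) (t::real). (1 + t\<^sup>2) powr (-s/D))"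
  let ?h = "\<lambda>\<eta>::'a. norm \<eta> powr (-2*\<alpha>) * (1 + C * norm \<eta> ^ \<gamma>) powr (-e0)"
  have pt: "ennreal (?h \<eta>) \<le> ennreal (\<Prod>b\<in>Basis. f1 b (\<eta> \<bullet> b)) + ennreal (K * (\<Prod>b\<in>Basis. f2 b (\<eta> \<bullet> b)))"
    if nz: "\<forall>b\<in>Basis. \<eta> \<bullet> b \<noteq> 0" for \<eta>
  proof -
    have f1nn: "0 \<le> (\<Prod>b\<in>Basis. f1 b (\<eta> \<bullet> b))" by (auto simp: f1_def intro!: prod_nonneg)
    have f2nn: "0 \<le> K * (\<Prod>b\<in>Basis. f2 b (\<eta> \<bullet> b))" using K_nn by (auto simp: f2_def intro!: prod_nonneg mult_nonneg_nonneg)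
    have le1: "(1 + C * norm \<eta> ^ \<gamma>) powr (-e0) \<le> 1"
      using C e0 by (intro powr_neg_le_one) auto
    show ?thesis
    proof (cases "\<alpha> > 0 \<and> norm \<eta> < 1")
      case True
      have "?h \<eta> \<le> norm \<eta> powr (-2*\<alpha>)"
        using le1 mult_left_mono[OF le1, of "norm \<eta> powr (-2*\<alpha>)"] by simp
      also have "\<dots> \<le> (\<Prod>b\<in>Basis. f1 b (\<eta> \<bullet> b))"
        using sing_bound[of "2*\<alpha>" \<eta>] True nz by (simp add: f1_def D_def)
      finally have "?h \<eta> \<le> (\<Prod>b\<in>Basis. f1 b (\<eta> \<bullet> b))" .
      then have "ennreal (?h \<eta>) \<le> ennreal (\<Prod>b\<in>Basis. f1 b (\<eta> \<bullet> b))"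
        by (rule ennreal_leI)
      then show ?thesis by (rule order_trans) simp
    next
      case False
      let ?r = "norm \<eta>"
      have c1: "?r powr (-2*\<alpha>) \<le> 2 powr \<bar>\<alpha>\<bar> * (1 + ?r\<^sup>2) powr (-\<alpha>)"
        using False by (intro sing_powr_bound) auto
      have c2: "(1 + C * ?r ^ \<gamma>) powr (-e0) \<le> min 1 C powr (-e0) * (1 + ?r\<^sup>2) powr (- (real \<gamma> * e0 / 2))"
        using C g e0 by (intro decay_gamma) auto
      have "?h \<eta> \<le> (2 powr \<bar>\<alpha>\<bar> * (1 + ?r\<^sup>2) powr (-\<alpha>)) * (min 1 C powr (-e0) * (1 + ?r\<^sup>2) powr (- (real \<gamma> * e0 / 2)))"
        by (intro mult_mono c1 c2) auto
      also have "\<dots> = K * ((1 + ?r\<^sup>2) powr (-\<alpha>) * (1 + ?r\<^sup>2) powr (- (real \<gamma> * e0 / 2)))"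
        by (simp add: K_def)
      also have "(1 + ?r\<^sup>2) powr (-\<alpha>) * (1 + ?r\<^sup>2) powr (- (real \<gamma> * e0 / 2)) = (1 + ?r\<^sup>2) powr (-s)"
        by (simp add: s_def powr_add[symmetric])
      also have "K * \<dots> \<le> K * (\<Prod>b\<in>Basis. f2 b (\<eta> \<bullet> b))"
        using tail_bound[OF s_nn, of \<eta>] K_nn by (intro mult_left_mono) (auto simp: f2_def D_def)
      finally have "ennreal (?h \<eta>) \<le> ennreal (K * (\<Prod>b\<in>Basis. f2 b (\<eta> \<bullet> b)))"
        by (rule ennreal_leI)
      then show ?thesis by (rule order_trans) simp
    qed
  qed
  have "(\<integral>\<^sup>+\<eta>. ennreal (?h \<eta>) \<partial>lborel) \<le> (\<integral>\<^sup>+\<eta>. ennreal (\<Prod>b\<in>Basis. f1 b (\<eta> \<bullet> b)) + ennreal (K * (\<Prod>b\<in>Basis. f2 b (\<eta> \<bullet> b))) \<partial>lborel)"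
    by (intro nn_integral_mono_AE eventually_mono[OF AE_coords_nonzero] pt) auto
  also have "\<dots> = (\<integral>\<^sup>+\<eta>. ennreal (\<Prod>b\<in>Basis. f1 b (\<eta> \<bullet> b)) \<partial>lborel) + (\<integral>\<^sup>+\<eta>. ennreal K * ennreal (\<Prod>b\<in>Basis. f2 b (\<eta> \<bullet> b)) \<partial>lborel)"
  proof -
    have "(\<integral>\<^sup>+\<eta>. ennreal (\<Prod>b\<in>Basis. f1 b (\<eta> \<bullet> b)) + ennreal (K * (\<Prod>b\<in>Basis. f2 b (\<eta> \<bullet> b))) \<partial>lborel)
      = (\<integral>\<^sup>+\<eta>. ennreal (\<Prod>b\<in>Basis. f1 b (\<eta> \<bullet> b)) \<partial>lborel) + (\<integral>\<^sup>+\<eta>. ennreal (K * (\<Prod>b\<in>Basis. f2 b (\<eta> \<bullet> b))) \<partial>lborel)"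
      by (rule nn_integral_add) (auto simp: f1_def f2_def)
    moreover have "(\<integral>\<^sup>+\<eta>. ennreal (K * (\<Prod>b\<in>Basis. f2 b (\<eta> \<bullet> b))) \<partial>lborel) = (\<integral>\<^sup>+\<eta>. ennreal K * ennreal (\<Prod>b\<in>Basis. f2 b (\<eta> \<bullet> b)) \<partial>lborel)"
      using K_nn by (intro nn_integral_cong) (auto simp: f2_def ennreal_mult prod_nonneg)
    ultimately show ?thesis by simp
  qed
  also have "(\<integral>\<^sup>+\<eta>. ennreal K * ennreal (\<Prod>b\<in>Basis. f2 b (\<eta> \<bullet> b)) \<partial>lborel) = ennreal K * (\<integral>\<^sup>+\<eta>. ennreal (\<Prod>b\<in>Basis. f2 b (\<eta> \<bullet> b)) \<partial>lborel)"
    by (rule nn_integral_cmult) (auto simp: f2_def)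
  also have "(\<integral>\<^sup>+\<eta>. ennreal (\<Prod>b\<in>Basis. f1 b (\<eta> \<bullet> b)) \<partial>lborel) = (\<Prod>b\<in>Basis. (\<integral>\<^sup>+t. f1 b t \<partial>lborel))"
  proof -
    have "(\<integral>\<^sup>+\<eta>. ennreal (\<Prod>b\<in>Basis. f1 b (\<eta> \<bullet> b)) \<partial>lborel) = (\<integral>\<^sup>+\<eta>. (\<Prod>b\<in>Basis. ennreal (f1 b (\<eta> \<bullet> b))) \<partial>lborel)"
      by (intro nn_integral_cong, subst prod_ennreal) (auto simp: f1_def)
    also have "\<dots> = (\<Prod>b\<in>Basis. (\<integral>\<^sup>+t. f1 b t \<partial>lborel))"
      by (rule nn_integral_lborel_prod) (auto simp: f1_def)
    finally show ?thesis .
  qed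
  also have "(\<integral>\<^sup>+\<eta>. ennreal (\<Prod>b\<in>Basis. f2 b (\<eta> \<bullet> b)) \<partial>lborel) = (\<Prod>b\<in>Basis. (\<integral>\<^sup>+t. f2 b t \<partial>lborel))"
  proof -
    have "(\<integral>\<^sup>+\<eta>. ennreal (\<Prod>b\<in>Basis. f2 b (\<eta> \<bullet> b)) \<partial>lborel) = (\<integral>\<^sup>+\<eta>. (\<Prod>b\<in>Basis. ennreal (f2 b (\<eta> \<bullet> b))) \<partial>lborel)"
      by (intro nn_integral_cong, subst prod_ennreal) (auto simp: f2_def)
    also have "\<dots> = (\<Prod>b\<in>Basis. (\<integral>\<^sup>+t. f2 b t \<partial>lborel))"
      by (rule nn_integral_lborel_prod) (auto simp: f2_def)
    finally show ?thesis .
  qed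
  also have "(\<Prod>b\<in>(Basis::'a set). (\<integral>\<^sup>+t. f1 b t \<partial>lborel)) + ennreal K * (\<Prod>b\<in>(Basis::'a set). (\<integral>\<^sup>+t. f2 b t \<partial>lborel)) < \<infinity>"
  proof -
    have i1: "(\<integral>\<^sup>+t. f1 b t \<partial>lborel) < \<infinity>" for b
    proof -
      have "(\<integral>\<^sup>+t. f1 b t \<partial>lborel) = (\<integral>\<^sup>+t. ennreal (\<bar>t\<bar> powr (-(2*\<alpha>/D))) * indicator {-1..1} t \<partial>lborel)"
        by (intro nn_integral_cong) (auto simp: f1_def split: split_indicator)
      also have "\<dots> < \<infinity>" using \<alpha> Dpos by (intro fin1a) (simp add: D_def field_simps)
      finally show ?thesis .
    qed
    have i2: "(\<integral>\<^sup>+t. f2 b t \<partial>lborel) < \<infinity>" for b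
    proof -
      have "(\<integral>\<^sup>+t. f2 b t \<partial>lborel) = (\<integral>\<^sup>+t. ennreal ((1 + t\<^sup>2) powr (-(s/D))) \<partial>lborel)"
        by (simp add: f2_def)
      also have "\<dots> < \<infinity>" using s_big by (intro fin1b)
      finally show ?thesis .
    qed
    show ?thesis using i1 i2
      by (simp add: less_top[symmetric] ennreal_prod_eq_top ennreal_mult_eq_top_iff)
  qed
  finally show ?thesis .
qed


lemma nn_integral_scale:
  fixes f :: "'a::euclidean_space \<Rightarrow> ennreal" and c :: real
  assumes c: "c > 0" and [measurable]: "f \<in> borel_measurable borel"
  shows "(\<integral>\<^sup>+x. f x \<partial>lborel) = ennreal (c ^ DIM('a)) * (\<integral>\<^sup>+x. f (c *\<^sub>R x) \<partial>lborel)"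
proof -
  have eq: "(lborel::'a measure) = density (distr lborel borel (\<lambda>x::'a. 0 + c *\<^sub>R x)) (\<lambda>_. ennreal (\<bar>c\<bar>^DIM('a)))"
    using lborel_affine[of c "0::'a"] c by simp
  have "(\<integral>\<^sup>+x. f x \<partial>lborel) = (\<integral>\<^sup>+x. f x \<partial>(density (distr lborel borel (\<lambda>x::'a. 0 + c *\<^sub>R x)) (\<lambda>_. ennreal (\<bar>c\<bar>^DIM('a)))))"
    by (subst (1) eq) (rule refl)
  also have "\<dots> = (\<integral>\<^sup>+x. ennreal (\<bar>c\<bar>^DIM('a)) * f x \<partial>(distr lborel borel (\<lambda>x::'a. 0 + c *\<^sub>R x)))"
    by (rule nn_integral_density) auto
  also have "\<dots> = (\<integral>\<^sup>+x. ennreal (\<bar>c\<bar>^DIM('a)) * f (0 + c *\<^sub>R x) \<partial>lborel)"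
    by (rule nn_integral_distr) auto
  also have "\<dots> = ennreal (c ^ DIM('a)) * (\<integral>\<^sup>+x. f (c *\<^sub>R x) \<partial>lborel)"
    using c by (subst nn_integral_cmult) auto
  finally show ?thesis .
qed

lemma scale_lemma:
  fixes \<alpha> e0 C E :: real and \<gamma> :: nat
  assumes E: "E > 0" and C: "C > 0" and g: "\<gamma> > 0"
  shows "(\<integral>\<^sup>+x. ennreal (norm (x::'a::euclidean_space) powr (-2*\<alpha>) * (E + C * norm x ^ \<gamma>) powr (-e0)) \<partial>lborel)
    = ennreal (E powr ((DIM('a) - 2*\<alpha>) / \<gamma> - e0)) *
      (\<integral>\<^sup>+x. ennreal (norm (x::'a) powr (-2*\<alpha>) * (1 + C * norm x ^ \<gamma>) powr (-e0)) \<partial>lborel)"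
proof -
  define c where "c = E powr (1 / \<gamma>)"
  have cpos: "c > 0" using E by (simp add: c_def)
  have cg: "c ^ \<gamma> = E"
  proof -
    have "c ^ \<gamma> = c powr (real \<gamma>)" using cpos by (simp add: powr_realpow)
    also have "\<dots> = E" using E g by (simp add: c_def powr_powr)
    finally show ?thesis .
  qed
  have cD: "c ^ DIM('a) = E powr (DIM('a) / \<gamma>)"
    using cpos E by (simp add: c_def powr_realpow[symmetric] powr_powr)
  have c2a: "c powr (- (2 * \<alpha>)) = E powr (- (2 * \<alpha> / real \<gamma>))"
    using E by (simp add: c_def powr_powr)
  have "(\<integral>\<^sup>+x. ennreal (norm (x::'a) powr (-2*\<alpha>) * (E + C * norm x ^ \<gamma>) powr (-e0)) \<partial>lborel)
     = ennreal (c ^ DIM('a)) * (\<integral>\<^sup>+x. ennreal (norm (c *\<^sub>R (x::'a)) powr (-2*\<alpha>) * (E + C * norm (c *\<^sub>R x) ^ \<gamma>) powr (-e0)) \<partial>lborel)"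
  proof -
    have meas: "(\<lambda>x::'a. ennreal (norm x powr (-2*\<alpha>) * (E + C * norm x ^ \<gamma>) powr (-e0))) \<in> borel_measurable borel"
      by measurable
    show ?thesis by (rule nn_integral_scale[OF cpos meas])
  qed
  also have "(\<integral>\<^sup>+x. ennreal (norm (c *\<^sub>R (x::'a)) powr (-2*\<alpha>) * (E + C * norm (c *\<^sub>R x) ^ \<gamma>) powr (-e0)) \<partial>lborel)
     = (\<integral>\<^sup>+x. ennreal (E powr (-2*\<alpha>/\<gamma> - e0)) * ennreal (norm (x::'a) powr (-2*\<alpha>) * (1 + C * norm x ^ \<gamma>) powr (-e0)) \<partial>lborel)"
  proof (intro nn_integral_cong)
    fix x :: 'a
    have n: "norm (c *\<^sub>R x) = c * norm x" using cpos by simp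
    have A: "norm (c *\<^sub>R x) powr (-2*\<alpha>) = E powr (-2*\<alpha>/\<gamma>) * norm x powr (-2*\<alpha>)"
      using cpos by (simp add: n powr_mult c2a)
    have B1: "E + C * norm (c *\<^sub>R x) ^ \<gamma> = E * (1 + C * norm x ^ \<gamma>)"
      using cpos by (simp add: abs_of_pos power_mult_distrib cg algebra_simps)
    have B2: "(E * (1 + C * norm x ^ \<gamma>)) powr (-e0) = E powr (-e0) * (1 + C * norm x ^ \<gamma>) powr (-e0)"
      using E C by (simp add: powr_mult)
    have e1: "E powr (-2*\<alpha>/\<gamma> - e0) = E powr (-2*\<alpha>/\<gamma>) * E powr (-e0)"
      by (subst powr_add[symmetric]) simp
    have "norm (c *\<^sub>R x) powr (-2*\<alpha>) * (E + C * norm (c *\<^sub>R x) ^ \<gamma>) powr (-e0)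
        = E powr (-2*\<alpha>/\<gamma> - e0) * (norm x powr (-2*\<alpha>) * (1 + C * norm x ^ \<gamma>) powr (-e0))"
      unfolding A B1 B2 e1 by (simp only: mult_ac)
    then show "ennreal (norm (c *\<^sub>R x) powr (-2*\<alpha>) * (E + C * norm (c *\<^sub>R x) ^ \<gamma>) powr (-e0))
        = ennreal (E powr (-2*\<alpha>/\<gamma> - e0)) * ennreal (norm x powr (-2*\<alpha>) * (1 + C * norm x ^ \<gamma>) powr (-e0))"
      by (simp add: ennreal_mult[symmetric])
  qed
  also have "\<dots> = ennreal (E powr (-2*\<alpha>/\<gamma> - e0)) * (\<integral>\<^sup>+x. ennreal (norm (x::'a) powr (-2*\<alpha>) * (1 + C * norm x ^ \<gamma>) powr (-e0)) \<partial>lborel)"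
    by (rule nn_integral_cmult) auto
  also have "ennreal (c ^ DIM('a)) * (ennreal (E powr (-2*\<alpha>/\<gamma> - e0)) * X) = ennreal (E powr ((DIM('a) - 2*\<alpha>) / \<gamma> - e0)) * X" for X
  proof -
    have "c ^ DIM('a) * E powr (-2*\<alpha>/\<gamma> - e0) = E powr ((DIM('a) - 2*\<alpha>) / \<gamma> - e0)"
      by (simp add: cD powr_add[symmetric] diff_divide_distrib algebra_simps)
    then show ?thesis using cpos
      by (simp add: mult.assoc[symmetric] ennreal_mult[symmetric])
  qed
  finally show ?thesis .
qed


lemma single_var:
  fixes v \<omega> :: "'a::euclidean_space \<Rightarrow> real" and \<alpha> C m :: real and \<gamma> :: nat
  assumes [measurable]: "v \<in> borel_measurable borel" "\<omega> \<in> borel_measurable borel"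
    and C: "C > 0" and g: "\<gamma> \<in> {1,2}" and \<alpha>: "2*\<alpha> < DIM('a)" and m: "m > 0"
    and \<omega>b: "\<And>k. \<omega> k \<ge> C * norm k ^ \<gamma>"
    and vb: "\<And>k. k \<noteq> 0 \<Longrightarrow> \<bar>v k\<bar> \<le> C * norm k powr (-\<alpha>)"
  shows "\<exists>K\<ge>0. \<forall>E\<ge>1. \<forall>e\<ge>(DIM('a) - 2*\<alpha>)/\<gamma> + m.
     (\<integral>\<^sup>+x. ennreal (\<bar>v x\<bar>^2 * (E + \<omega> x) powr (-e)) \<partial>lborel) \<le> ennreal (K * E powr ((DIM('a) - 2*\<alpha>)/\<gamma> - e))"
proof -
  define e0 where "e0 = (DIM('a) - 2*\<alpha>)/\<gamma> + m"
  have gpos: "real \<gamma> > 0" using g by auto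
  have e0nn: "e0 \<ge> 0" using \<alpha> gpos m by (simp add: e0_def)
  have ge0eq: "real \<gamma> * e0 = DIM('a) - 2*\<alpha> + real \<gamma> * m" using gpos by (simp add: e0_def field_simps)
  have ge0: "real \<gamma> * e0 > DIM('a) - 2*\<alpha>" using gpos m ge0eq mult_pos_pos[of "real \<gamma>" m] by linarith
  define G where "G = (\<integral>\<^sup>+\<eta>. ennreal (norm (\<eta>::'a) powr (-2*\<alpha>) * (1 + C * norm \<eta> ^ \<gamma>) powr (-e0)) \<partial>lborel)"
  have Gfin: "G < \<infinity>" unfolding G_def by (rule G_fin[OF \<alpha> C e0nn g ge0])
  define K where "K = C\<^sup>2 * enn2real G"
  have Knn: "K \<ge> 0" by (simp add: K_def)
  have GK: "ennreal (C\<^sup>2) * G = ennreal K"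
    using Gfin C by (simp add: K_def ennreal_mult ennreal_enn2real_if)
  show ?thesis
  proof (intro exI[of _ K] conjI allI impI Knn)
    fix E e :: real assume E: "1 \<le> E" and e: "(DIM('a) - 2*\<alpha>)/\<gamma> + m \<le> e"
    then have ee0: "e \<ge> e0" by (simp add: e0_def)
    have Epos: "E > 0" using E by simp
    have pt: "ennreal (\<bar>v x\<bar>^2 * (E + \<omega> x) powr (-e)) \<le>
        ennreal (E powr (-(e - e0)) * C\<^sup>2) * ennreal (norm x powr (-2*\<alpha>) * (E + C * norm x ^ \<gamma>) powr (-e0))"
      if x: "x \<noteq> 0" for x
    proof -
      have nx: "norm x > 0" using x by simp
      have v2: "\<bar>v x\<bar>^2 \<le> C\<^sup>2 * norm x powr (-2*\<alpha>)"
      proof -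
        have "\<bar>v x\<bar>^2 \<le> (C * norm x powr (-\<alpha>))^2"
          using vb[OF x] by (intro power_mono) auto
        also have "\<dots> = C\<^sup>2 * norm x powr (-2*\<alpha>)"
          using nx by (simp add: power_mult_distrib powr_realpow[symmetric] powr_powr mult.commute)
        finally show ?thesis .
      qed
      have low: "E + C * norm x ^ \<gamma> > 0" using Epos C by (simp add: add_pos_nonneg)
      have wge: "E + \<omega> x \<ge> E + C * norm x ^ \<gamma>" using \<omega>b[of x] by simp
      have split: "(E + \<omega> x) powr (-e) = (E + \<omega> x) powr (-e0) * (E + \<omega> x) powr (-(e - e0))"
        by (simp add: powr_add[symmetric])
      have p1: "(E + \<omega> x) powr (-e0) \<le> (E + C * norm x ^ \<gamma>) powr (-e0)"
        using low wge e0nn by (intro powr_mono2') auto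
      have p2: "(E + \<omega> x) powr (-(e - e0)) \<le> E powr (-(e - e0))"
        using Epos wge ee0 low C by (intro powr_mono2') (auto intro: order_trans[OF _ \<omega>b])
      have "(E + \<omega> x) powr (-e) \<le> (E + C * norm x ^ \<gamma>) powr (-e0) * E powr (-(e - e0))"
        unfolding split by (intro mult_mono p1 p2) auto
      then have "\<bar>v x\<bar>^2 * (E + \<omega> x) powr (-e) \<le> (C\<^sup>2 * norm x powr (-2*\<alpha>)) * ((E + C * norm x ^ \<gamma>) powr (-e0) * E powr (-(e - e0)))"
        by (intro mult_mono v2) auto
      also have "\<dots> = (E powr (-(e - e0)) * C\<^sup>2) * (norm x powr (-2*\<alpha>) * (E + C * norm x ^ \<gamma>) powr (-e0))"
        by (simp only: mult_ac)
      finally show ?thesis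
        by (subst ennreal_mult[symmetric]) (auto intro!: ennreal_leI)
    qed
    have "(\<integral>\<^sup>+x. ennreal (\<bar>v x\<bar>^2 * (E + \<omega> x) powr (-e)) \<partial>lborel) \<le>
        (\<integral>\<^sup>+x. ennreal (E powr (-(e - e0)) * C\<^sup>2) * ennreal (norm (x::'a) powr (-2*\<alpha>) * (E + C * norm x ^ \<gamma>) powr (-e0)) \<partial>lborel)"
      by (intro nn_integral_mono_AE eventually_mono[OF AE_lborel_singleton[of 0]] pt) auto
    also have "\<dots> = ennreal (E powr (-(e - e0)) * C\<^sup>2) * (\<integral>\<^sup>+x. ennreal (norm (x::'a) powr (-2*\<alpha>) * (E + C * norm x ^ \<gamma>) powr (-e0)) \<partial>lborel)"
      by (rule nn_integral_cmult) auto
    also have "(\<integral>\<^sup>+x. ennreal (norm (x::'a) powr (-2*\<alpha>) * (E + C * norm x ^ \<gamma>) powr (-e0)) \<partial>lborel)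
        = ennreal (E powr ((DIM('a) - 2*\<alpha>) / \<gamma> - e0)) * G"
      unfolding G_def using Epos C gpos by (intro scale_lemma) auto
    also have "ennreal (E powr (-(e - e0)) * C\<^sup>2) * (ennreal (E powr ((DIM('a) - 2*\<alpha>) / \<gamma> - e0)) * G)
        = ennreal (E powr (-(e - e0)) * E powr ((DIM('a) - 2*\<alpha>) / \<gamma> - e0)) * (ennreal (C\<^sup>2) * G)"
      by (simp add: ennreal_mult[symmetric] mult_ac)
    also have "E powr (-(e - e0)) * E powr ((DIM('a) - 2*\<alpha>) / \<gamma> - e0) = E powr ((DIM('a) - 2*\<alpha>)/\<gamma> - e)"
      by (simp add: powr_add[symmetric])
    also have "ennreal (E powr ((DIM('a) - 2*\<alpha>)/\<gamma> - e)) * (ennreal (C\<^sup>2) * G) = ennreal (K * E powr ((DIM('a) - 2*\<alpha>)/\<gamma> - e))"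
      unfolding GK using Knn by (simp add: ennreal_mult mult.commute)
    finally show "(\<integral>\<^sup>+x. ennreal (\<bar>v x\<bar>^2 * (E + \<omega> x) powr (-e)) \<partial>lborel) \<le> ennreal (K * E powr ((DIM('a) - 2*\<alpha>)/\<gamma> - e))" .
  qed
qed


lemma interp_inv:
  fixes a b S \<beta> :: real
  assumes "0 < a" "a \<le> S" "0 < b" "b \<le> S" "0 \<le> \<beta>" "\<beta> \<le> 1"
  shows "1 / S \<le> a powr (-(1-\<beta>)) * b powr (-\<beta>)"
proof -
  have Sp: "S > 0" using assms by simp
  have "S powr (-(1-\<beta>)) * S powr (-\<beta>) = S powr (-(1-\<beta>) + -\<beta>)"
    by (rule powr_add[symmetric])
  also have "\<dots> = S powr (-1)" by simp
  also have "\<dots> = 1 / S" using Sp by (simp add: powr_neg_one)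
  finally have "1 / S = S powr (-(1-\<beta>)) * S powr (-\<beta>)" by simp
  also have "\<dots> \<le> a powr (-(1-\<beta>)) * b powr (-\<beta>)"
    using assms by (intro mult_mono powr_mono2') auto
  finally show ?thesis .
qed

lemma powr_pow_eq: "0 < (x::real) \<Longrightarrow> (x powr a) ^ k = x powr (real k * a)"
  by (simp add: powr_realpow[symmetric] powr_powr mult.commute)

lemma rho_bound:
  fixes v \<omega> :: "real^'d::finite \<Rightarrow> real"
  assumes E: "E > 0" and \<omega>nn: "\<And>x. \<omega> x \<ge> 0" and \<beta>: "0 \<le> \<beta>" "\<beta> \<le> 1"
  shows "rho v \<omega> (Suc k) l U E \<le>
    (\<Prod>m<Suc k. \<bar>v (U m)\<bar> * (E + \<omega> (U m)) powr (-(if m = k then (1+l)/2 + real k * \<beta> else 1-\<beta>)))"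
proof -
  let ?w = "\<lambda>x. E + \<omega> x"
  have wpos: "?w x > 0" for x using E \<omega>nn[of x] by simp
  have fac: "\<bar>v (U j)\<bar> / (E + (\<Sum>i=j..k. \<omega> (U i))) \<le> \<bar>v (U j)\<bar> * ?w (U j) powr (-(1-\<beta>)) * ?w (U k) powr (-\<beta>)"
    if j: "j < k" for j
  proof -
    have s1: "\<omega> (U j) \<le> (\<Sum>i=j..k. \<omega> (U i))"
      using j \<omega>nn by (intro member_le_sum) auto
    have s2: "\<omega> (U k) \<le> (\<Sum>i=j..k. \<omega> (U i))"
      using j \<omega>nn by (intro member_le_sum) auto
    have "1 / (E + (\<Sum>i=j..k. \<omega> (U i))) \<le> ?w (U j) powr (-(1-\<beta>)) * ?w (U k) powr (-\<beta>)"
      using s1 s2 wpos \<beta> by (intro interp_inv) auto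
    then have "\<bar>v (U j)\<bar> * (1 / (E + (\<Sum>i=j..k. \<omega> (U i)))) \<le> \<bar>v (U j)\<bar> * (?w (U j) powr (-(1-\<beta>)) * ?w (U k) powr (-\<beta>))"
      by (intro mult_left_mono) auto
    then show ?thesis by (simp add: mult.assoc)
  qed
  have P: "(\<Prod>j<k. \<bar>v (U j)\<bar> / (E + (\<Sum>i=j..k. \<omega> (U i)))) \<le>
      (\<Prod>j<k. \<bar>v (U j)\<bar> * ?w (U j) powr (-(1-\<beta>)) * ?w (U k) powr (-\<beta>))"
  proof (intro prod_mono conjI)
    fix j assume "j \<in> {..<k}"
    then show "\<bar>v (U j)\<bar> / (E + (\<Sum>i=j..k. \<omega> (U i))) \<le> \<bar>v (U j)\<bar> * ?w (U j) powr (-(1-\<beta>)) * ?w (U k) powr (-\<beta>)"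
      using fac by auto
    show "0 \<le> \<bar>v (U j)\<bar> / (E + (\<Sum>i=j..k. \<omega> (U i)))"
      using E \<omega>nn by (intro divide_nonneg_nonneg add_nonneg_nonneg sum_nonneg) (auto simp: less_imp_le)
  qed
  also have "\<dots> = (\<Prod>j<k. \<bar>v (U j)\<bar> * ?w (U j) powr (-(1-\<beta>))) * ?w (U k) powr (-(real k * \<beta>))"
    by (simp add: prod.distrib powr_pow_eq[OF wpos])
  finally have P2: "(\<Prod>j<k. \<bar>v (U j)\<bar> / (E + (\<Sum>i=j..k. \<omega> (U i)))) \<le>
      (\<Prod>j<k. \<bar>v (U j)\<bar> * ?w (U j) powr (-(1-\<beta>))) * ?w (U k) powr (-(real k * \<beta>))" .
  have last: "\<bar>v (U k)\<bar> / ?w (U k) powr ((1 + l) / 2) = \<bar>v (U k)\<bar> * ?w (U k) powr (-((1 + l) / 2))"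
    by (simp add: powr_minus_divide)
  have "rho v \<omega> (Suc k) l U E = (\<Prod>j<k. \<bar>v (U j)\<bar> / (E + (\<Sum>i=j..k. \<omega> (U i)))) * (\<bar>v (U k)\<bar> * ?w (U k) powr (-((1 + l) / 2)))"
    by (simp add: rho_def last)
  also have "\<dots> \<le> ((\<Prod>j<k. \<bar>v (U j)\<bar> * ?w (U j) powr (-(1-\<beta>))) * ?w (U k) powr (-(real k * \<beta>))) * (\<bar>v (U k)\<bar> * ?w (U k) powr (-((1 + l) / 2)))"
    by (intro mult_right_mono P2) auto
  also have "\<dots> = (\<Prod>j<k. \<bar>v (U j)\<bar> * ?w (U j) powr (-(1-\<beta>))) * (\<bar>v (U k)\<bar> * ?w (U k) powr (-((1+l)/2 + real k * \<beta>)))"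
    by (simp add: powr_add[symmetric] mult_ac add_ac)
  also have "\<dots> = (\<Prod>m<Suc k. \<bar>v (U m)\<bar> * ?w (U m) powr (-(if m = k then (1+l)/2 + real k * \<beta> else 1-\<beta>)))"
    by (simp add: prod.lessThan_Suc)
  finally show ?thesis .
qed

lemma rho_tilde_bound:
  fixes v \<omega> :: "real^'d::finite \<Rightarrow> real"
  assumes E: "E > 0" and \<omega>nn: "\<And>x. \<omega> x \<ge> 0" and \<beta>: "0 \<le> \<beta>" "\<beta> \<le> 1"
  shows "rho_tilde v \<omega> (Suc k) l R E \<le>
    (\<Prod>m<Suc k. \<bar>v (R m)\<bar> * (E + \<omega> (R m)) powr (-(if m = 0 then (1+l)/2 + real k * \<beta> else 1-\<beta>)))"
proof -
  let ?w = "\<lambda>x. E + \<omega> x"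
  have wpos: "?w x > 0" for x using E \<omega>nn[of x] by simp
  have fac: "\<bar>v (R j)\<bar> / (E + (\<Sum>i=0..j. \<omega> (R i))) \<le> \<bar>v (R j)\<bar> * ?w (R j) powr (-(1-\<beta>)) * ?w (R 0) powr (-\<beta>)"
    for j
  proof -
    have s1: "\<omega> (R j) \<le> (\<Sum>i=0..j. \<omega> (R i))"
      using \<omega>nn by (intro member_le_sum) auto
    have s2: "\<omega> (R 0) \<le> (\<Sum>i=0..j. \<omega> (R i))"
      using \<omega>nn by (intro member_le_sum) auto
    have "1 / (E + (\<Sum>i=0..j. \<omega> (R i))) \<le> ?w (R j) powr (-(1-\<beta>)) * ?w (R 0) powr (-\<beta>)"
      using s1 s2 wpos \<beta> by (intro interp_inv) auto
    then have "\<bar>v (R j)\<bar> * (1 / (E + (\<Sum>i=0..j. \<omega> (R i)))) \<le> \<bar>v (R j)\<bar> * (?w (R j) powr (-(1-\<beta>)) * ?w (R 0) powr (-\<beta>))"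
      by (intro mult_left_mono) auto
    then show ?thesis by (simp add: mult.assoc)
  qed
  have P: "(\<Prod>j\<in>{1..<Suc k}. \<bar>v (R j)\<bar> / (E + (\<Sum>i=0..j. \<omega> (R i)))) \<le>
      (\<Prod>j\<in>{1..<Suc k}. \<bar>v (R j)\<bar> * ?w (R j) powr (-(1-\<beta>)) * ?w (R 0) powr (-\<beta>))"
  proof (intro prod_mono conjI)
    fix j
    show "\<bar>v (R j)\<bar> / (E + (\<Sum>i=0..j. \<omega> (R i))) \<le> \<bar>v (R j)\<bar> * ?w (R j) powr (-(1-\<beta>)) * ?w (R 0) powr (-\<beta>)"
      using fac by auto
    show "0 \<le> \<bar>v (R j)\<bar> / (E + (\<Sum>i=0..j. \<omega> (R i)))"
      using E \<omega>nn by (intro divide_nonneg_nonneg add_nonneg_nonneg sum_nonneg) (auto simp: less_imp_le)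
  qed
  also have "\<dots> = (\<Prod>j\<in>{1..<Suc k}. \<bar>v (R j)\<bar> * ?w (R j) powr (-(1-\<beta>))) * ?w (R 0) powr (-(real k * \<beta>))"
    by (simp add: prod.distrib powr_pow_eq[OF wpos])
  finally have P2: "(\<Prod>j\<in>{1..<Suc k}. \<bar>v (R j)\<bar> / (E + (\<Sum>i=0..j. \<omega> (R i)))) \<le>
      (\<Prod>j\<in>{1..<Suc k}. \<bar>v (R j)\<bar> * ?w (R j) powr (-(1-\<beta>))) * ?w (R 0) powr (-(real k * \<beta>))" .
  have first: "\<bar>v (R 0)\<bar> / ?w (R 0) powr ((1 + l) / 2) = \<bar>v (R 0)\<bar> * ?w (R 0) powr (-((1 + l) / 2))"
    by (simp add: powr_minus_divide)
  have "rho_tilde v \<omega> (Suc k) l R E = (\<bar>v (R 0)\<bar> * ?w (R 0) powr (-((1 + l) / 2))) * (\<Prod>j\<in>{1..<Suc k}. \<bar>v (R j)\<bar> / (E + (\<Sum>i=0..j. \<omega> (R i))))"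
    by (simp add: rho_tilde_def first)
  also have "\<dots> \<le> (\<bar>v (R 0)\<bar> * ?w (R 0) powr (-((1 + l) / 2))) * ((\<Prod>j\<in>{1..<Suc k}. \<bar>v (R j)\<bar> * ?w (R j) powr (-(1-\<beta>))) * ?w (R 0) powr (-(real k * \<beta>)))"
    by (intro mult_left_mono P2) auto
  also have "\<dots> = (\<bar>v (R 0)\<bar> * ?w (R 0) powr (-((1+l)/2 + real k * \<beta>))) * (\<Prod>j\<in>{1..<Suc k}. \<bar>v (R j)\<bar> * ?w (R j) powr (-(1-\<beta>)))"
    by (simp add: powr_add[symmetric] mult_ac add_ac)
  also have "\<dots> = (\<Prod>m<Suc k. \<bar>v (R m)\<bar> * ?w (R m) powr (-(if m = 0 then (1+l)/2 + real k * \<beta> else 1-\<beta>)))"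
  proof -
    have "{..<Suc k} = insert 0 {1..<Suc k}" by auto
    then show ?thesis by (simp add: prod.insert)
  qed
  finally show ?thesis .
qed


lemma rho_nonneg:
  assumes "E > 0" "\<And>x. \<omega> x \<ge> 0"
  shows "rho v \<omega> n l Q E \<ge> 0"
  using assms unfolding rho_def
  by (intro mult_nonneg_nonneg prod_nonneg divide_nonneg_nonneg add_nonneg_nonneg sum_nonneg) (auto simp: less_imp_le)

lemma rho_tilde_nonneg:
  assumes "E > 0" "\<And>x. \<omega> x \<ge> 0"
  shows "rho_tilde v \<omega> n l Q E \<ge> 0"
  using assms unfolding rho_tilde_def
  by (intro mult_nonneg_nonneg prod_nonneg divide_nonneg_nonneg add_nonneg_nonneg sum_nonneg) (auto simp: less_imp_le)

lemma final_bound: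
  fixes \<omega> :: "real^'d::finite \<Rightarrow> real" and \<Xi> :: "nat \<Rightarrow> real^'d"
  assumes E: "E > 0" and \<omega>nn: "\<And>x. \<omega> x \<ge> 0" and \<Omega>v: "\<Omega>v \<ge> 0" and ks: "ks < n" and n: "0 < n"
    and r: "0 \<le> r" "r \<le> 1"
  shows "1 / (\<Omega>v + E + (\<Sum>i<n. \<omega> (\<Xi> i))) \<le>
    (\<Prod>k<n. (E + \<omega> (\<Xi> k)) powr (-((if k = 0 then r else 0) + (if k = ks then 1-r else 0))))"
proof -
  let ?w = "\<lambda>x. E + \<omega> x"
  have wpos: "?w x > 0" for x using E \<omega>nn[of x] by simp
  have wne: "E + \<omega> x \<noteq> 0" for x using wpos[of x] by simp
  have Snn: "(\<Sum>i<n. \<omega> (\<Xi> i)) \<ge> 0" using \<omega>nn by (simp add: sum_nonneg)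
  have "1 / (\<Omega>v + E + (\<Sum>i<n. \<omega> (\<Xi> i))) \<le> 1 / (E + (\<Sum>i<n. \<omega> (\<Xi> i)))"
    using E Snn \<Omega>v by (intro divide_left_mono) auto
  also have "\<dots> \<le> ?w (\<Xi> 0) powr (-(1-(1-r))) * ?w (\<Xi> ks) powr (-(1-r))"
  proof (rule interp_inv)
    show "?w (\<Xi> 0) \<le> E + (\<Sum>i<n. \<omega> (\<Xi> i))"
      using n \<omega>nn by (intro add_left_mono member_le_sum) auto
    show "?w (\<Xi> ks) \<le> E + (\<Sum>i<n. \<omega> (\<Xi> i))"
      using ks \<omega>nn by (intro add_left_mono member_le_sum) auto
  qed (use wpos r in auto)
  also have "\<dots> = (\<Prod>k<n. (if k = 0 then ?w (\<Xi> k) powr (-r) else 1) * (if k = ks then ?w (\<Xi> k) powr (-(1-r)) else 1))"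
    using n ks wne by (simp add: prod.distrib)
  also have "\<dots> = (\<Prod>k<n. ?w (\<Xi> k) powr (-((if k = 0 then r else 0) + (if k = ks then 1-r else 0))))"
    using wne by (intro prod.cong refl) (auto simp: powr_add[symmetric])
  finally show ?thesis .
qed

definition expo :: "nat \<Rightarrow> real \<Rightarrow> real \<Rightarrow> real \<Rightarrow> real \<Rightarrow> (nat \<Rightarrow> nat) \<Rightarrow> nat \<Rightarrow> real" where
  "expo k' a b \<beta> r J k =
     (if k = 0 then (1+a)/2 + real k' * \<beta> else 1-\<beta>) +
     (if J k = k' then (1+b)/2 + real k' * \<beta> else 1-\<beta>) +
     ((if k = 0 then r else 0) + (if k = inv J k' then 1-r else 0))"

lemma core_bound:
  fixes v \<omega> :: "real^'d::finite \<Rightarrow> real" and \<Xi> :: "nat \<Rightarrow> real^'d"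
  assumes J: "J permutes {..<Suc k'}" and E: "E > 0" and \<omega>nn: "\<And>x. \<omega> x \<ge> 0" and \<Omega>v: "\<Omega>v \<ge> 0"
    and \<beta>: "0 \<le> \<beta>" "\<beta> \<le> 1" and r: "0 \<le> r" "r \<le> 1"
  shows "rho_tilde v \<omega> (Suc k') a \<Xi> E * rho v \<omega> (Suc k') b (\<lambda>k. \<Xi> (inv J k)) E / (\<Omega>v + E + (\<Sum>i<Suc k'. \<omega> (\<Xi> i)))
    \<le> (\<Prod>k<Suc k'. \<bar>v (\<Xi> k)\<bar>^2 * (E + \<omega> (\<Xi> k)) powr (-(expo k' a b \<beta> r J k)))"
proof -
  let ?w = "\<lambda>x. E + \<omega> x"
  have wpos: "?w x > 0" for x using E \<omega>nn[of x] by simp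
  define T1 where "T1 = (\<lambda>m. \<bar>v (\<Xi> m)\<bar> * ?w (\<Xi> m) powr (-(if m = 0 then (1+a)/2 + real k' * \<beta> else 1-\<beta>)))"
  define T2 where "T2 = (\<lambda>m. \<bar>v (\<Xi> m)\<bar> * ?w (\<Xi> m) powr (-(if J m = k' then (1+b)/2 + real k' * \<beta> else 1-\<beta>)))"
  define T3 where "T3 = (\<lambda>m. ?w (\<Xi> m) powr (-((if m = 0 then r else 0) + (if m = inv J k' then 1-r else 0))))"
  have A: "rho_tilde v \<omega> (Suc k') a \<Xi> E \<le> (\<Prod>m<Suc k'. T1 m)"
    unfolding T1_def by (rule rho_tilde_bound[OF E \<omega>nn \<beta>])
  have "rho v \<omega> (Suc k') b (\<lambda>k. \<Xi> (inv J k)) E \<le>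
      (\<Prod>m<Suc k'. \<bar>v (\<Xi> (inv J m))\<bar> * ?w (\<Xi> (inv J m)) powr (-(if m = k' then (1+b)/2 + real k' * \<beta> else 1-\<beta>)))"
    by (rule rho_bound[OF E \<omega>nn \<beta>])
  also have "\<dots> = (\<Prod>m<Suc k'. T2 m)"
  proof -
    have "(\<Prod>m<Suc k'. \<bar>v (\<Xi> (inv J m))\<bar> * ?w (\<Xi> (inv J m)) powr (-(if m = k' then (1+b)/2 + real k' * \<beta> else 1-\<beta>)))
        = (\<Prod>m<Suc k'. \<bar>v (\<Xi> (inv J (J m)))\<bar> * ?w (\<Xi> (inv J (J m))) powr (-(if J m = k' then (1+b)/2 + real k' * \<beta> else 1-\<beta>)))"
      by (rule prod.reindex_bij_betw[symmetric]) (rule permutes_imp_bij[OF J])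
    also have "\<dots> = (\<Prod>m<Suc k'. T2 m)"
      unfolding T2_def by (simp add: permutes_inverses[OF J])
    finally show ?thesis .
  qed
  finally have B: "rho v \<omega> (Suc k') b (\<lambda>k. \<Xi> (inv J k)) E \<le> (\<Prod>m<Suc k'. T2 m)" .
  have ks: "inv J k' < Suc k'"
    using permutes_in_image[OF permutes_inv[OF J], of k'] by simp
  have C: "1 / (\<Omega>v + E + (\<Sum>i<Suc k'. \<omega> (\<Xi> i))) \<le> (\<Prod>m<Suc k'. T3 m)"
    unfolding T3_def by (rule final_bound[OF E \<omega>nn \<Omega>v ks _ r]) simp
  have T1nn: "0 \<le> (\<Prod>m<Suc k'. T1 m)" unfolding T1_def by (intro prod_nonneg mult_nonneg_nonneg) auto
  have T2nn: "0 \<le> (\<Prod>m<Suc k'. T2 m)" unfolding T2_def by (intro prod_nonneg mult_nonneg_nonneg) auto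
  have "rho_tilde v \<omega> (Suc k') a \<Xi> E * rho v \<omega> (Suc k') b (\<lambda>k. \<Xi> (inv J k)) E / (\<Omega>v + E + (\<Sum>i<Suc k'. \<omega> (\<Xi> i)))
      = rho_tilde v \<omega> (Suc k') a \<Xi> E * rho v \<omega> (Suc k') b (\<lambda>k. \<Xi> (inv J k)) E * (1 / (\<Omega>v + E + (\<Sum>i<Suc k'. \<omega> (\<Xi> i))))"
    by simp
  also have "\<dots> \<le> ((\<Prod>m<Suc k'. T1 m) * (\<Prod>m<Suc k'. T2 m)) * (\<Prod>m<Suc k'. T3 m)"
  proof -
    have Dnn: "0 \<le> \<Omega>v + E + (\<Sum>i<Suc k'. \<omega> (\<Xi> i))"
      using E \<Omega>v \<omega>nn by (intro add_nonneg_nonneg sum_nonneg) auto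
    show ?thesis
      using rho_tilde_nonneg[OF E \<omega>nn] rho_nonneg[OF E \<omega>nn] T1nn T2nn Dnn
      by (intro mult_mono A B C) (auto intro!: mult_nonneg_nonneg)
  qed
  also have "\<dots> = (\<Prod>m<Suc k'. T1 m * T2 m * T3 m)"
    by (simp add: prod.distrib)
  also have "\<dots> = (\<Prod>k<Suc k'. \<bar>v (\<Xi> k)\<bar>^2 * (E + \<omega> (\<Xi> k)) powr (-(expo k' a b \<beta> r J k)))"
  proof (intro prod.cong refl)
    fix m
    have "T1 m * T2 m * T3 m = (\<bar>v (\<Xi> m)\<bar> * \<bar>v (\<Xi> m)\<bar>) *
       (?w (\<Xi> m) powr (-(if m = 0 then (1+a)/2 + real k' * \<beta> else 1-\<beta>)) *
        ?w (\<Xi> m) powr (-(if J m = k' then (1+b)/2 + real k' * \<beta> else 1-\<beta>)) *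
        ?w (\<Xi> m) powr (-((if m = 0 then r else 0) + (if m = inv J k' then 1-r else 0))))"
      by (simp add: T1_def T2_def T3_def mult_ac)
    also have "\<dots> = \<bar>v (\<Xi> m)\<bar>^2 * ?w (\<Xi> m) powr (-(expo k' a b \<beta> r J m))"
      by (simp add: expo_def powr_add[symmetric] power2_eq_square algebra_simps)
    finally show "T1 m * T2 m * T3 m = \<bar>v (\<Xi> m)\<bar>^2 * ?w (\<Xi> m) powr (-(expo k' a b \<beta> r J m))" .
  qed
  finally show ?thesis .
qed


lemma expo_sum:
  assumes J: "J permutes {..<Suc k'}"
  shows "(\<Sum>k<Suc k'. expo k' a b \<beta> r J k) = (1+a)/2 + (1+b)/2 + 2 * real k' + 1"
proof -
  have ks: "inv J k' < Suc k'"
    using permutes_in_image[OF permutes_inv[OF J], of k'] by simp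
  have s1: "(\<Sum>k<Suc k'. (if k = 0 then (1+a)/2 + real k' * \<beta> else 1-\<beta>)) = (1+a)/2 + real k'"
  proof -
    have "{..<Suc k'} = insert 0 {1..<Suc k'}" by auto
    then have "(\<Sum>k<Suc k'. (if k = 0 then (1+a)/2 + real k' * \<beta> else 1-\<beta>)) = (1+a)/2 + real k' * \<beta> + (\<Sum>k\<in>{1..<Suc k'}. 1-\<beta>)"
      by (simp add: sum.insert)
    also have "\<dots> = (1+a)/2 + real k'" by (simp add: algebra_simps)
    finally show ?thesis .
  qed
  have s2: "(\<Sum>k<Suc k'. (if J k = k' then (1+b)/2 + real k' * \<beta> else 1-\<beta>)) = (1+b)/2 + real k'"
  proof -
    have "(\<Sum>k<Suc k'. (if J k = k' then (1+b)/2 + real k' * \<beta> else 1-\<beta>)) = (\<Sum>m<Suc k'. (if m = k' then (1+b)/2 + real k' * \<beta> else 1-\<beta>))"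
      by (rule sum.reindex_bij_betw) (rule permutes_imp_bij[OF J])
    also have "\<dots> = (1+b)/2 + real k'"
      by (simp add: algebra_simps)
    finally show ?thesis .
  qed
  have a1: "(\<Sum>k<Suc k'. (if k = 0 then r else 0)) = r" by (subst sum.delta) auto
  have a2: "(\<Sum>k<Suc k'. (if k = inv J k' then 1 - r else 0)) = 1 - r" using ks by (subst sum.delta) auto
  have s3: "(\<Sum>k<Suc k'. ((if k = 0 then r else 0) + (if k = inv J k' then 1-r else 0))) = 1"
  proof -
    have "(\<Sum>k<Suc k'. ((if k = 0 then r else 0) + (if k = inv J k' then 1-r else 0)))
       = (\<Sum>k<Suc k'. (if k = 0 then r else 0)) + (\<Sum>k<Suc k'. (if k = inv J k' then 1 - r else 0))"
      by (rule sum.distrib)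
    then show ?thesis using a1 a2 by simp
  qed
  show ?thesis
    unfolding expo_def sum.distrib s1 s2 a1 a2 by simp
qed

definition rchoice :: "nat \<Rightarrow> real \<Rightarrow> real \<Rightarrow> real \<Rightarrow> real \<Rightarrow> (nat \<Rightarrow> nat) \<Rightarrow> real" where
  "rchoice k' P Q \<beta> \<theta> J = (if inv J k' = 0 then 0 else
     max 0 (min 1 (((Q + (real k' - 1) * \<beta> - \<theta> + 1) - (P + (real k' - 1) * \<beta> - \<theta>)) / 2)))"

lemma rchoice_range: "0 \<le> rchoice k' P Q \<beta> \<theta> J" "rchoice k' P Q \<beta> \<theta> J \<le> 1"
  by (auto simp: rchoice_def)

lemma clamp_arith:
  fixes r A1 A2 S \<theta> m \<eta> :: real
  assumes rr: "r = max 0 (min 1 ((A2 - A1)/2))" and h: "S/2 \<le> A1 + A2" "1 - \<theta> \<le> A2" "1 - \<theta> \<le> A1 + 1"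
    "m \<le> \<eta>" "m \<le> S/4" "\<eta> \<le> (1 - \<theta>)/4" "0 < \<eta>"
  shows "m \<le> A1 + r \<and> m \<le> A2 - r"
proof (cases "(A2 - A1)/2 \<le> 0")
  case True
  then have "r = 0" using rr by simp
  note rv = this
  have "m \<le> A1 + r" using rv h True by (simp add: field_simps)
  moreover have "m \<le> A2 - r" using rv h True by (simp add: field_simps)
  ultimately show ?thesis by simp
next
  case False
  show ?thesis
  proof (cases "(A2 - A1)/2 \<ge> 1")
    case True
    then have "r = 1" using rr by simp
    note rv = this
    have "m \<le> A1 + r" using rv h True by (simp add: field_simps)
    moreover have "m \<le> A2 - r" using rv h True by (simp add: field_simps)
  ultimately show ?thesis by simp
  next
    case False2: False
    then have "r = (A2 - A1)/2" using rr False by simp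
    note rv = this
    have "m \<le> A1 + r" using rv h by (simp add: field_simps)
    moreover have "m \<le> A2 - r" using rv h by (simp add: field_simps)
    ultimately show ?thesis by simp
  qed
qed

lemma expo_lower:
  fixes \<theta> L a b :: real
  assumes J: "J permutes {..<Suc k'}"
    and th: "\<theta> < 1"
    and S: "S = L + real (Suc k') * (1 - \<theta>)" "S > 0"
    and PQ: "(1+a)/2 + (1+b)/2 = 1 + L" "0 \<le> (1+a)/2" "(1+a)/2 \<le> 1" "0 \<le> (1+b)/2" "(1+b)/2 \<le> 1"
    and \<eta>: "\<eta> = min (S / (4 * real (Suc k'))) ((1 - \<theta>)/4)"
    and \<beta>: "\<beta> = (1 - \<theta>)/2 - \<eta>"
    and m: "m = min (S/4) \<eta>"
    and r: "r = rchoice k' ((1+a)/2) ((1+b)/2) \<beta> \<theta> J"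
    and k: "k < Suc k'"
  shows "expo k' a b \<beta> r J k \<ge> 1 + \<theta> + m"
proof -
  define P where "P = (1+a)/2"
  define Q where "Q = (1+b)/2"
  have n0: "real (Suc k') > 0" by simp
  have \<eta>pos: "\<eta> > 0" using S th n0 by (simp add: \<eta>)
  have \<eta>1: "\<eta> \<le> (1 - \<theta>)/4" unfolding \<eta> by (rule min.cobounded2)
  have \<eta>2: "4 * real (Suc k') * \<eta> \<le> S"
  proof -
    have "\<eta> \<le> S / (4 * real (Suc k'))" unfolding \<eta> by (rule min.cobounded1)
    then show ?thesis using n0 by (simp add: field_simps)
  qed
  have m1: "m \<le> \<eta>" "m \<le> S/4" using m by auto
  have \<beta>nn: "\<beta> \<ge> 0" using \<beta> \<eta>1 th by simp
  have kb: "real k' * \<eta> \<le> S / 4" using \<eta>2 \<eta>pos by (simp add: algebra_simps)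
  have e_def: "expo k' a b \<beta> r J k =
     (if k = 0 then P + real k' * \<beta> else 1-\<beta>) +
     (if J k = k' then Q + real k' * \<beta> else 1-\<beta>) +
     ((if k = 0 then r else 0) + (if J k = k' then 1-r else 0))"
  proof -
    have invJ: "inv J (J k) = k" by (rule permutes_inverses(2)[OF J])
    have "(k = inv J k') = (J k = k')" using invJ permutes_inv_eq[OF J] by metis
    then show ?thesis unfolding expo_def P_def Q_def by simp
  qed
  show ?thesis
  proof (cases "k = 0")
    case k0: True
    show ?thesis
    proof (cases "J k = k'")
      case True
      have "expo k' a b \<beta> r J k = P + Q + 2 * (real k' * \<beta>) + 1"
        using k0 True e_def by simp
      moreover have "real k' * \<beta> = real k' * (1 - \<theta>)/2 - real k' * \<eta>"
        by (simp add: \<beta> algebra_simps)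
      ultimately show ?thesis
        using PQ S m1 kb \<eta>pos by (simp add: P_def Q_def algebra_simps)
    next
      case False
      then have ks0: "inv J k' \<noteq> 0" using k0 permutes_inv_eq[OF J] by auto
      have k'1: "k' \<ge> 1"
      proof (rule ccontr)
        assume "\<not> k' \<ge> 1" then have "k' = 0" by simp
        then show False using False k0 k J permutes_in_image[OF J, of 0] by auto
      qed
      have "expo k' a b \<beta> r J k = P + real k' * \<beta> + (1 - \<beta>) + r"
        using k0 False e_def by simp
      have rr: "r = max 0 (min 1 (((Q + (real k' - 1) * \<beta> - \<theta> + 1) - (P + (real k' - 1) * \<beta> - \<theta>)) / 2))"
        using ks0 by (simp add: r rchoice_def P_def Q_def)
      define A1 where "A1 = P + (real k' - 1) * \<beta> - \<theta>"
      define A2 where "A2 = Q + (real k' - 1) * \<beta> - \<theta> + 1"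
      have sumA: "A1 + A2 \<ge> S / 2"
      proof -
        have "A1 + A2 = S - 2 * ((real k' - 1) * \<eta>)"
          using PQ S by (simp add: A1_def A2_def \<beta> P_def Q_def algebra_simps)
        moreover have "(real k' - 1) * \<eta> \<le> S / 4" using kb \<eta>pos by (simp add: algebra_simps)
        ultimately show ?thesis by simp
      qed
      have A2lb: "A2 \<ge> 1 - \<theta>"
        using PQ k'1 \<beta>nn by (simp add: A2_def Q_def)
      have A1lb: "A1 + 1 \<ge> 1 - \<theta>"
        using PQ k'1 \<beta>nn by (simp add: A1_def P_def)
      have "expo k' a b \<beta> r J k - (1 + \<theta>) = A1 + r"
        using k0 False e_def by (simp add: A1_def algebra_simps)
      moreover have "A1 + r \<ge> m"
        using clamp_arith[OF rr[unfolded A1_def[symmetric] A2_def[symmetric]] sumA A2lb A1lb m1(1) m1(2) \<eta>1 \<eta>pos] by simp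
      ultimately show ?thesis by simp
    qed
  next
    case kn0: False
    show ?thesis
    proof (cases "J k = k'")
      case False
      have "expo k' a b \<beta> r J k = 2 - 2 * \<beta>"
        using kn0 False e_def by simp
      moreover have "2 - 2 * \<beta> = 1 + \<theta> + 2 * \<eta>" by (simp add: \<beta> field_simps)
      ultimately show ?thesis using m1 \<eta>pos by linarith
    next
      case True
      have ks0: "inv J k' \<noteq> 0" using kn0 True permutes_inverses(2)[OF J, of k] by auto
      have k'1: "k' \<ge> 1"
      proof (rule ccontr)
        assume "\<not> k' \<ge> 1" then have "k' = 0" by simp
        then show False using kn0 k by auto
      qed
      have rr: "r = max 0 (min 1 (((Q + (real k' - 1) * \<beta> - \<theta> + 1) - (P + (real k' - 1) * \<beta> - \<theta>)) / 2))"
        using ks0 by (simp add: r rchoice_def P_def Q_def)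
      define A1 where "A1 = P + (real k' - 1) * \<beta> - \<theta>"
      define A2 where "A2 = Q + (real k' - 1) * \<beta> - \<theta> + 1"
      have sumA: "A1 + A2 \<ge> S / 2"
      proof -
        have "A1 + A2 = S - 2 * ((real k' - 1) * \<eta>)"
          using PQ S by (simp add: A1_def A2_def \<beta> P_def Q_def algebra_simps)
        moreover have "(real k' - 1) * \<eta> \<le> S / 4" using kb \<eta>pos by (simp add: algebra_simps)
        ultimately show ?thesis by simp
      qed
      have A1lb: "A1 + 1 \<ge> 1 - \<theta>"
        using PQ k'1 \<beta>nn by (simp add: A1_def P_def)
      have A2lb: "A2 \<ge> 1 - \<theta>"
        using PQ k'1 \<beta>nn by (simp add: A2_def Q_def)
      have "expo k' a b \<beta> r J k - (1 + \<theta>) = A2 - r"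
        using kn0 True e_def by (simp add: A2_def algebra_simps)
      moreover have "A2 - r \<ge> m"
        using clamp_arith[OF rr[unfolded A1_def[symmetric] A2_def[symmetric]] sumA A2lb A1lb m1(1) m1(2) \<eta>1 \<eta>pos] by simp
      ultimately show ?thesis by simp
    qed
  qed
qed


lemma psf_lborel: "product_sigma_finite (\<lambda>_::nat. (lborel :: (real^'d::finite) measure))"
  unfolding product_sigma_finite_def using sigma_finite_lborel by blast

lemma norm_integral_le_nn:
  fixes f :: "'a \<Rightarrow> complex"
  shows "ennreal (cmod (integral\<^sup>L M f)) \<le> (\<integral>\<^sup>+x. ennreal (cmod (f x)) \<partial>M)"
proof (cases "integrable M f")
  case True
  then show ?thesis using integral_norm_bound_ennreal[OF True] by simp
next
  case False
  then show ?thesis by (simp add: not_integrable_integral_eq)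
qed

lemma J_bound:
  fixes v \<omega> \<Omega> :: "real^'d::finite \<Rightarrow> real" and \<kappa> \<kappa>' :: "'d kernel"
  assumes J: "J permutes {..<Suc k'}" and E: "E \<ge> 1"
    and \<omega>nn: "\<And>x. \<omega> x \<ge> 0" and \<Omega>nn: "\<And>x. \<Omega> x \<ge> 0"
    and [measurable]: "v \<in> borel_measurable borel" "\<omega> \<in> borel_measurable borel"
    and A1: "A1 \<ge> 0" and A2: "A2 \<ge> 0"
    and hk1: "\<And>\<Xi>. cmod (\<kappa> Q \<Xi> p E) \<le> A1 * rho_tilde v \<omega> (Suc k') a \<Xi> E"
    and hk2: "\<And>\<Xi>. cmod (\<kappa>' (\<lambda>k. \<Xi> (inv J k)) R p E) \<le> A2 * rho v \<omega> (Suc k') b (\<lambda>k. \<Xi> (inv J k)) E"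
    and \<beta>: "0 \<le> \<beta>" "\<beta> \<le> 1" and r: "0 \<le> r" "r \<le> 1"
    and K: "K \<ge> 0"
    and hsv: "\<And>k. k < Suc k' \<Longrightarrow> (\<integral>\<^sup>+x. ennreal (\<bar>v x\<bar>^2 * (E + \<omega> x) powr (-(expo k' a b \<beta> r J k))) \<partial>lborel)
                 \<le> ennreal (K * E powr (c0 - expo k' a b \<beta> r J k))"
  shows "cmod (\<integral>\<Xi>. \<kappa> Q \<Xi> p E * \<kappa>' (\<lambda>k. \<Xi> (inv J k)) R p E /
             complex_of_real (\<Omega> (p + (\<Sum>i<Suc k'. \<Xi> i)) + E + (\<Sum>i<Suc k'. \<omega> (\<Xi> i))) \<partial>Rnd (Suc k'))
      \<le> A1 * A2 * K ^ Suc k' * E powr (real (Suc k') * c0 - (\<Sum>k<Suc k'. expo k' a b \<beta> r J k))"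
proof -
  interpret PSF: product_sigma_finite "\<lambda>_::nat. (lborel :: (real^'d) measure)" by (rule psf_lborel)
  have Epos: "E > 0" using E by simp
  let ?n = "Suc k'"
  let ?e = "\<lambda>k. expo k' a b \<beta> r J k"
  let ?g = "\<lambda>k x. ennreal (\<bar>v x\<bar>^2 * (E + \<omega> x) powr (-(?e k)))"
  let ?f = "\<lambda>\<Xi>. \<kappa> Q \<Xi> p E * \<kappa>' (\<lambda>k. \<Xi> (inv J k)) R p E /
             complex_of_real (\<Omega> (p + (\<Sum>i<?n. \<Xi> i)) + E + (\<Sum>i<?n. \<omega> (\<Xi> i)))"
  have pt: "ennreal (cmod (?f \<Xi>)) \<le> ennreal (A1 * A2) * (\<Prod>k<?n. ?g k (\<Xi> k))" for \<Xi>
  proof -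
    define D where "D = \<Omega> (p + (\<Sum>i<?n. \<Xi> i)) + E + (\<Sum>i<?n. \<omega> (\<Xi> i))"
    have Dpos: "D > 0" using Epos \<Omega>nn \<omega>nn by (simp add: D_def add_nonneg_pos add_pos_nonneg sum_nonneg)
    have fD: "?f \<Xi> = \<kappa> Q \<Xi> p E * \<kappa>' (\<lambda>k. \<Xi> (inv J k)) R p E / complex_of_real D"
      unfolding D_def by (rule refl)
    have "cmod (?f \<Xi>) = cmod (\<kappa> Q \<Xi> p E) * cmod (\<kappa>' (\<lambda>k. \<Xi> (inv J k)) R p E) / D"
      unfolding fD using Dpos by (simp only: norm_mult norm_divide norm_of_real abs_of_pos)
    also have "\<dots> \<le> (A1 * rho_tilde v \<omega> ?n a \<Xi> E) * (A2 * rho v \<omega> ?n b (\<lambda>k. \<Xi> (inv J k)) E) / D"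
      using Dpos by (intro divide_right_mono mult_mono hk1 hk2) (auto intro!: mult_nonneg_nonneg A1 rho_tilde_nonneg[OF Epos \<omega>nn])
    also have "\<dots> = (A1 * A2) * (rho_tilde v \<omega> ?n a \<Xi> E * rho v \<omega> ?n b (\<lambda>k. \<Xi> (inv J k)) E / D)"
      by simp
    also have "\<dots> \<le> (A1 * A2) * (\<Prod>k<?n. \<bar>v (\<Xi> k)\<bar>^2 * (E + \<omega> (\<Xi> k)) powr (-(?e k)))"
      unfolding D_def using A1 A2
      by (intro mult_left_mono core_bound[OF J Epos \<omega>nn \<Omega>nn \<beta> r]) auto
    finally have "cmod (?f \<Xi>) \<le> (A1 * A2) * (\<Prod>k<?n. \<bar>v (\<Xi> k)\<bar>^2 * (E + \<omega> (\<Xi> k)) powr (-(?e k)))" .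
    then have "ennreal (cmod (?f \<Xi>)) \<le> ennreal ((A1 * A2) * (\<Prod>k<?n. \<bar>v (\<Xi> k)\<bar>^2 * (E + \<omega> (\<Xi> k)) powr (-(?e k))))"
      by (rule ennreal_leI)
    also have "\<dots> = ennreal (A1 * A2) * (\<Prod>k<?n. ?g k (\<Xi> k))"
    proof -
      have pe: "ennreal (\<Prod>k<?n. \<bar>v (\<Xi> k)\<bar>^2 * (E + \<omega> (\<Xi> k)) powr (-(?e k))) = (\<Prod>k<?n. ?g k (\<Xi> k))"
        by (rule prod_ennreal[symmetric]) simp
      have me: "ennreal ((A1 * A2) * (\<Prod>k<?n. \<bar>v (\<Xi> k)\<bar>^2 * (E + \<omega> (\<Xi> k)) powr (-(?e k))))
          = ennreal (A1 * A2) * ennreal (\<Prod>k<?n. \<bar>v (\<Xi> k)\<bar>^2 * (E + \<omega> (\<Xi> k)) powr (-(?e k)))"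
        using A1 A2 by (intro ennreal_mult mult_nonneg_nonneg prod_nonneg) auto
      show ?thesis unfolding me pe ..
    qed
    finally show ?thesis .
  qed
  have "ennreal (cmod (integral\<^sup>L (Rnd ?n) ?f)) \<le> (\<integral>\<^sup>+\<Xi>. ennreal (cmod (?f \<Xi>)) \<partial>Rnd ?n)"
    by (rule norm_integral_le_nn)
  also have "\<dots> \<le> (\<integral>\<^sup>+\<Xi>. ennreal (A1 * A2) * (\<Prod>k<?n. ?g k (\<Xi> k)) \<partial>Rnd ?n)"
    by (intro nn_integral_mono pt)
  also have "\<dots> = ennreal (A1 * A2) * (\<integral>\<^sup>+\<Xi>. (\<Prod>k<?n. ?g k (\<Xi> k)) \<partial>Rnd ?n)"
    unfolding Rnd_def by (rule nn_integral_cmult) measurable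
  also have "(\<integral>\<^sup>+\<Xi>. (\<Prod>k<?n. ?g k (\<Xi> k)) \<partial>Rnd ?n) = (\<Prod>k<?n. (\<integral>\<^sup>+x. ?g k x \<partial>lborel))"
    unfolding Rnd_def by (rule PSF.product_nn_integral_prod) auto
  also have "(\<Prod>k<?n. (\<integral>\<^sup>+x. ?g k x \<partial>lborel)) \<le> (\<Prod>k<?n. ennreal (K * E powr (c0 - ?e k)))"
    by (intro prod_mono_ennreal hsv) simp
  also have "(\<Prod>k<?n. ennreal (K * E powr (c0 - ?e k))) = ennreal (\<Prod>k<?n. K * E powr (c0 - ?e k))"
    using K by (intro prod_ennreal) simp
  also have "(\<Prod>k<?n. K * E powr (c0 - ?e k)) = K ^ ?n * E powr (real ?n * c0 - (\<Sum>k<?n. ?e k))"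
  proof -
    have "(\<Prod>k<?n. K * E powr (c0 - ?e k)) = K ^ ?n * (\<Prod>k<?n. E powr (c0 - ?e k))"
      by (simp add: prod.distrib)
    also have "(\<Prod>k<?n. E powr (c0 - ?e k)) = E powr (\<Sum>k<?n. (c0 - ?e k))"
      by (rule powr_sum[symmetric]) (use Epos in simp)
    also have "(\<Sum>k<?n. (c0 - ?e k)) = real ?n * c0 - (\<Sum>k<?n. ?e k)"
      by (simp add: sum_subtractf)
    finally show ?thesis .
  qed
  also have "ennreal (A1 * A2) * ennreal (K ^ ?n * E powr (real ?n * c0 - (\<Sum>k<?n. ?e k)))
      = ennreal (A1 * A2 * K ^ ?n * E powr (real ?n * c0 - (\<Sum>k<?n. ?e k)))"
    using A1 A2 K by (simp add: ennreal_mult[symmetric] mult.assoc)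
  finally have "ennreal (cmod (integral\<^sup>L (Rnd ?n) ?f)) \<le> ennreal (A1 * A2 * K ^ ?n * E powr (real ?n * c0 - (\<Sum>k<?n. ?e k)))"
    by (simp add: mult_left_mono)
  then show ?thesis
    using A1 A2 K by (subst (asm) ennreal_le_iff) auto
qed


lemma INF_nonneg_real:
  fixes f :: "real \<Rightarrow> real"
  assumes "I \<noteq> {}" "\<And>x. x \<in> I \<Longrightarrow> f x \<ge> 0"
  shows "(INF x\<in>I. f x) \<ge> 0"
  using assms by (intro cINF_greatest) auto

lemma INF_le_at:
  fixes f :: "real \<Rightarrow> real"
  assumes "s \<in> I" "\<And>x. x \<in> I \<Longrightarrow> f x \<ge> 0"
  shows "(INF x\<in>I. f x) \<le> f s"
proof -
  have "bdd_below (f ` I)" using assms(2) by (intro bdd_belowI[of _ 0]) auto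
  then show ?thesis using assms(1) by (rule cINF_lower)
qed

lemma kernel_bound_at:
  fixes \<kappa> :: "'d::finite kernel" and v \<omega> :: "real^'d \<Rightarrow> real"
  assumes c: "\<forall>Q R p E. E \<ge> 1 \<longrightarrow> cmod (\<kappa> Q R p E) \<le>
        c * E powr (- \<mu>) * (INF s\<in>{lam-1..1-lam}. rho v \<omega> n (lam + s) Q E * rho_tilde v \<omega> n (lam - s) R E)"
    and E: "E \<ge> 1" and \<omega>nn: "\<And>x. \<omega> x \<ge> 0" and s: "s \<in> {lam-1..1-lam}"
  shows "cmod (\<kappa> Q R p E) \<le> max c 0 * E powr (- \<mu>) * (rho v \<omega> n (lam + s) Q E * rho_tilde v \<omega> n (lam - s) R E)"
proof -
  have Epos: "E > 0" using E by simp
  let ?I = "INF s\<in>{lam-1..1-lam}. rho v \<omega> n (lam + s) Q E * rho_tilde v \<omega> n (lam - s) R E"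
  have nn: "\<And>x. 0 \<le> rho v \<omega> n (lam + x) Q E * rho_tilde v \<omega> n (lam - x) R E"
    by (intro mult_nonneg_nonneg rho_nonneg rho_tilde_nonneg Epos \<omega>nn)
  have Inn: "?I \<ge> 0" using s nn by (intro INF_nonneg_real) auto
  have Ile: "?I \<le> rho v \<omega> n (lam + s) Q E * rho_tilde v \<omega> n (lam - s) R E"
    using s nn by (intro INF_le_at) auto
  have "cmod (\<kappa> Q R p E) \<le> c * E powr (- \<mu>) * ?I" using c E by blast
  also have "\<dots> \<le> max c 0 * E powr (- \<mu>) * ?I"
    using Inn by (intro mult_right_mono) auto
  also have "\<dots> \<le> max c 0 * E powr (- \<mu>) * (rho v \<omega> n (lam + s) Q E * rho_tilde v \<omega> n (lam - s) R E)"
    using Ile by (intro mult_left_mono) auto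
  finally show ?thesis .
qed


theorem lemmaA4:
  fixes v \<omega> \<Omega> :: "real^'d::finite \<Rightarrow> real"
    and \<alpha> :: real and \<gamma> n :: nat
    and \<kappa> \<kappa>' :: "'d kernel"
    and \<mu> \<mu>' lam lam' \<sigma> :: real
  assumes SA: "standing_assumptions v \<omega> \<Omega> \<alpha> \<gamma>"
    and v_meas: "v \<in> borel_measurable borel"
    and \<omega>_meas: "\<omega> \<in> borel_measurable borel"
    and n: "n \<ge> 1"
    and K: "\<kappa> \<in> kernel_class v \<omega> n" and K': "\<kappa>' \<in> kernel_class v \<omega> n"
    and \<mu>: "\<mu> \<ge> 0" and \<mu>': "\<mu>' \<ge> 0"
    and lam: "0 \<le> lam" "lam \<le> 1" and lam': "0 \<le> lam'" "lam' \<le> 1"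
    and bound: "\<exists>c. \<forall>Q R p E. E \<ge> 1 \<longrightarrow> cmod (\<kappa> Q R p E) \<le>
        c * E powr (- \<mu>) * (INF s\<in>{lam-1..1-lam}.
              rho v \<omega> n (lam + s) Q E * rho_tilde v \<omega> n (lam - s) R E)"
    and bound': "\<exists>c. \<forall>Q R p E. E \<ge> 1 \<longrightarrow> cmod (\<kappa>' Q R p E) \<le>
        c * E powr (- \<mu>') * (INF s\<in>{lam'-1..1-lam'}.
              rho v \<omega> n (lam' + s) Q E * rho_tilde v \<omega> n (lam' - s) R E)"
    and \<sigma>: "0 \<le> \<sigma>" "\<sigma> \<le> 1" "max lam lam' \<le> \<sigma>"
      "\<sigma> < lam + lam' + real n * (1 - delta \<alpha> \<gamma> TYPE('d) / real \<gamma>)"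
  shows "\<exists>c. \<forall>Q R p E. E \<ge> 1 \<longrightarrow>
      cmod (full_contraction \<omega> \<Omega> n \<kappa> \<kappa>' Q R p E) \<le>
        c * E powr (- (\<mu> + \<mu>' + max (lam + lam' + real n * (1 - delta \<alpha> \<gamma> TYPE('d) / real \<gamma>) - 1) 0))
          * (INF s\<in>{\<sigma>-1..1-\<sigma>}. rho v \<omega> n (\<sigma> + s) Q E * rho_tilde v \<omega> n (\<sigma> - s) R E)"
proof -
  from SA have \<omega>nn: "\<And>x. \<omega> x \<ge> 0" and \<Omega>nn: "\<And>x. \<Omega> x \<ge> 0"
    and \<alpha>D: "\<alpha> < real CARD('d) / 2" and g: "\<gamma> \<in> {1, 2}"
    and dg: "real CARD('d) - 2 * \<alpha> - real \<gamma> < real \<gamma>"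
    unfolding standing_assumptions_def by auto
  from SA obtain C cb cp where C: "C > 0" and cb: "cb > 0"
    and vb: "\<forall>k. (k \<noteq> 0 \<or> \<alpha> \<le> 0) \<longrightarrow> \<bar>v k\<bar> \<le> C * (if k = 0 \<and> \<alpha> = 0 then 1 else norm k powr (- \<alpha>))"
    and \<omega>b: "\<forall>k. \<omega> k \<ge> C * sqrt (cb + (norm k)\<^sup>2) ^ \<gamma>"
    unfolding standing_assumptions_def by blast
  have \<omega>b': "C * norm k ^ \<gamma> \<le> \<omega> k" for k
  proof -
    have "norm k \<le> sqrt (cb + (norm k)\<^sup>2)"
      using cb by (intro real_le_rsqrt) auto
    then have "norm k ^ \<gamma> \<le> sqrt (cb + (norm k)\<^sup>2) ^ \<gamma>"
      by (intro power_mono) auto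
    then have "C * norm k ^ \<gamma> \<le> C * sqrt (cb + (norm k)\<^sup>2) ^ \<gamma>"
      using C by (intro mult_left_mono) auto
    then show ?thesis using \<omega>b by (meson order_trans)
  qed
  have vb': "\<bar>v k\<bar> \<le> C * norm k powr (-\<alpha>)" if "k \<noteq> 0" for k
    using vb that by auto
  define \<theta> where "\<theta> = delta \<alpha> \<gamma> TYPE('d) / real \<gamma>"
  have gpos: "real \<gamma> > 0" using g by auto
  have DIMeq: "real DIM(real^'d) = real CARD('d)" by simp
  have D2: "2 * \<alpha> < real DIM(real^'d)" using \<alpha>D DIMeq by simp
  have \<theta>1: "\<theta> < 1" using dg gpos by (simp add: \<theta>_def delta_def)
  have \<theta>c: "(real DIM(real^'d) - 2 * \<alpha>) / real \<gamma> = 1 + \<theta>"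
    using gpos by (simp add: \<theta>_def delta_def field_simps)
  have \<theta>m1: "\<theta> > -1"
  proof -
    have "(real DIM(real^'d) - 2 * \<alpha>) / real \<gamma> > 0" using D2 gpos by simp
    then show ?thesis using \<theta>c by simp
  qed
  define L where "L = lam + lam' - \<sigma>"
  define S where "S = L + real n * (1 - \<theta>)"
  have Spos: "S > 0" using \<sigma>(4) by (simp add: S_def L_def \<theta>_def)
  obtain k' where nk: "n = Suc k'" using n by (cases n) auto
  define \<eta> where "\<eta> = min (S / (4 * real (Suc k'))) ((1 - \<theta>)/4)"
  define \<beta> where "\<beta> = (1 - \<theta>)/2 - \<eta>"
  define m where "m = min (S/4) \<eta>"
  have \<eta>pos: "\<eta> > 0" using Spos \<theta>1 by (simp add: \<eta>_def)
  have \<eta>1: "\<eta> \<le> (1 - \<theta>)/4" unfolding \<eta>_def by (rule min.cobounded2)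
  have mpos: "m > 0" using Spos \<eta>pos by (simp add: m_def)
  have \<beta>0: "0 \<le> \<beta>" using \<eta>1 \<theta>1 by (simp add: \<beta>_def)
  have \<beta>1: "\<beta> \<le> 1" unfolding \<beta>_def using \<eta>pos \<theta>m1 by (simp add: field_simps)
  obtain K where K: "K \<ge> 0" and Kb: "\<forall>E\<ge>1. \<forall>e\<ge>(real DIM(real^'d) - 2*\<alpha>)/\<gamma> + m.
     (\<integral>\<^sup>+x. ennreal (\<bar>v x\<bar>^2 * (E + \<omega> x) powr (-e)) \<partial>lborel) \<le> ennreal (K * E powr ((real DIM(real^'d) - 2*\<alpha>)/\<gamma> - e))"
    using single_var[OF v_meas \<omega>_meas C g D2 mpos \<omega>b' vb'] by blast
  obtain c1 where c1: "\<forall>Q R p E. E \<ge> 1 \<longrightarrow> cmod (\<kappa> Q R p E) \<le>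
        c1 * E powr (- \<mu>) * (INF s\<in>{lam-1..1-lam}. rho v \<omega> n (lam + s) Q E * rho_tilde v \<omega> n (lam - s) R E)"
    using bound by blast
  obtain c2 where c2: "\<forall>Q R p E. E \<ge> 1 \<longrightarrow> cmod (\<kappa>' Q R p E) \<le>
        c2 * E powr (- \<mu>') * (INF s\<in>{lam'-1..1-lam'}. rho v \<omega> n (lam' + s) Q E * rho_tilde v \<omega> n (lam' - s) R E)"
    using bound' by blast
  define c1' where "c1' = max c1 0"
  define c2' where "c2' = max c2 0"
  define B0 where "B0 = fact n * c1' * c2' * K ^ n"
  have B0nn: "B0 \<ge> 0" using K by (simp add: B0_def c1'_def c2'_def)
  define c where "c = B0 + 1"
  show ?thesis
  proof (intro exI[of _ c] allI impI)
    fix Q R p and E :: real assume E: "1 \<le> E"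
    have Epos: "E > 0" using E by simp
    define \<tau> where "\<tau> = \<mu> + \<mu>' + max (lam + lam' + real n * (1 - delta \<alpha> \<gamma> TYPE('d) / real \<gamma>) - 1) 0"
    let ?F = "\<lambda>t. rho v \<omega> n (\<sigma> + t) Q E * rho_tilde v \<omega> n (\<sigma> - t) R E"
    have Fnn: "?F t \<ge> 0" for t
      by (intro mult_nonneg_nonneg rho_nonneg rho_tilde_nonneg Epos \<omega>nn)
    have key: "cmod (full_contraction \<omega> \<Omega> n \<kappa> \<kappa>' Q R p E) \<le> B0 * E powr (-\<tau>) * ?F t"
      if t: "t \<in> {\<sigma>-1..1-\<sigma>}" for t
    proof -
      have lamS: "lam \<le> \<sigma>" "lam' \<le> \<sigma>" using \<sigma>(3) by auto
      define s where "s = \<sigma> + t - lam"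
      define s' where "s' = lam' - \<sigma> + t"
      define a where "a = lam - s"
      define b where "b = lam' + s'"
      have s_in: "s \<in> {lam-1..1-lam}" using t lamS by (auto simp: s_def)
      have s'_in: "s' \<in> {lam'-1..1-lam'}" using t lamS by (auto simp: s'_def)
      have ls: "lam + s = \<sigma> + t" "lam' - s' = \<sigma> - t" by (simp_all add: s_def s'_def)
      define A1 where "A1 = c1' * E powr (-\<mu>) * rho v \<omega> n (\<sigma> + t) Q E"
      define A2 where "A2 = c2' * E powr (-\<mu>') * rho_tilde v \<omega> n (\<sigma> - t) R E"
      have A1nn: "A1 \<ge> 0" unfolding A1_def c1'_def
        by (intro mult_nonneg_nonneg rho_nonneg Epos \<omega>nn) auto
      have A2nn: "A2 \<ge> 0" unfolding A2_def c2'_def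
        by (intro mult_nonneg_nonneg rho_tilde_nonneg Epos \<omega>nn) auto
      have hk1: "cmod (\<kappa> Q \<Xi> p E) \<le> A1 * rho_tilde v \<omega> (Suc k') a \<Xi> E" for \<Xi>
      proof -
        have "cmod (\<kappa> Q \<Xi> p E) \<le> max c1 0 * E powr (-\<mu>) * (rho v \<omega> n (lam + s) Q E * rho_tilde v \<omega> n (lam - s) \<Xi> E)"
          by (rule kernel_bound_at[OF c1 E \<omega>nn s_in])
        also have "\<dots> = A1 * rho_tilde v \<omega> (Suc k') a \<Xi> E"
          unfolding A1_def c1'_def a_def ls nk by (simp only: mult_ac)
        finally show ?thesis .
      qed
      have hk2: "cmod (\<kappa>' U R p E) \<le> A2 * rho v \<omega> (Suc k') b U E" for U
      proof -
        have "cmod (\<kappa>' U R p E) \<le> max c2 0 * E powr (-\<mu>') * (rho v \<omega> n (lam' + s') U E * rho_tilde v \<omega> n (lam' - s') R E)"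
          by (rule kernel_bound_at[OF c2 E \<omega>nn s'_in])
        also have "\<dots> = A2 * rho v \<omega> (Suc k') b U E"
          unfolding A2_def c2'_def b_def ls nk by (simp only: mult_ac)
        finally show ?thesis .
      qed
      have PQ: "(1+a)/2 + (1+b)/2 = 1 + L" by (simp add: a_def b_def s_def s'_def L_def field_simps)
      have Pr: "0 \<le> (1+a)/2" "(1+a)/2 \<le> 1" using t lamS lam by (auto simp: a_def s_def)
      have Qr: "0 \<le> (1+b)/2" "(1+b)/2 \<le> 1" using t lamS lam' by (auto simp: b_def s'_def)
      have Sdef': "S = L + real (Suc k') * (1 - \<theta>)" by (simp add: S_def nk)
      have Jb: "cmod (\<integral>\<Xi>. \<kappa> Q \<Xi> p E * \<kappa>' (\<lambda>k. \<Xi> (inv J k)) R p E /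
             complex_of_real (\<Omega> (p + (\<Sum>i<Suc k'. \<Xi> i)) + E + (\<Sum>i<Suc k'. \<omega> (\<Xi> i))) \<partial>Rnd (Suc k'))
          \<le> A1 * A2 * K ^ Suc k' * E powr (-S)"
        if J: "J permutes {..<Suc k'}" for J
      proof -
        define r where "r = rchoice k' ((1+a)/2) ((1+b)/2) \<beta> \<theta> J"
        have r01: "0 \<le> r" "r \<le> 1" unfolding r_def by (rule rchoice_range)+
        have hsv: "(\<integral>\<^sup>+x. ennreal (\<bar>v x\<bar>^2 * (E + \<omega> x) powr (-(expo k' a b \<beta> r J k))) \<partial>lborel)
                 \<le> ennreal (K * E powr ((1 + \<theta>) - expo k' a b \<beta> r J k))" if k: "k < Suc k'" for k
        proof -
          have "expo k' a b \<beta> r J k \<ge> 1 + \<theta> + m"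
            by (rule expo_lower[OF J \<theta>1 Sdef' Spos PQ Pr Qr \<eta>_def \<beta>_def m_def r_def k])
          then have "expo k' a b \<beta> r J k \<ge> (real DIM(real^'d) - 2*\<alpha>)/\<gamma> + m" using \<theta>c by simp
          then show ?thesis using Kb E \<theta>c by auto
        qed
        have "cmod (\<integral>\<Xi>. \<kappa> Q \<Xi> p E * \<kappa>' (\<lambda>k. \<Xi> (inv J k)) R p E /
             complex_of_real (\<Omega> (p + (\<Sum>i<Suc k'. \<Xi> i)) + E + (\<Sum>i<Suc k'. \<omega> (\<Xi> i))) \<partial>Rnd (Suc k'))
          \<le> A1 * A2 * K ^ Suc k' * E powr (real (Suc k') * (1 + \<theta>) - (\<Sum>k<Suc k'. expo k' a b \<beta> r J k))"
          by (rule J_bound[where \<kappa>=\<kappa> and \<kappa>'=\<kappa>' and Q=Q and R=R and p=p and v=v and \<omega>=\<omega> and \<Omega>=\<Omega> and a=a and b=b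
                and \<beta>=\<beta> and r=r and K=K and E=E,
                OF J E \<omega>nn \<Omega>nn v_meas \<omega>_meas A1nn A2nn hk1 hk2 \<beta>0 \<beta>1 r01 K hsv])
        also have "real (Suc k') * (1 + \<theta>) - (\<Sum>k<Suc k'. expo k' a b \<beta> r J k) = -S"
          unfolding expo_sum[OF J] using PQ by (simp add: S_def nk algebra_simps)
        finally show ?thesis .
      qed
      have "cmod (full_contraction \<omega> \<Omega> n \<kappa> \<kappa>' Q R p E) \<le>
          (\<Sum>J\<in>{J. J permutes {..<Suc k'}}. cmod (\<integral>\<Xi>. \<kappa> Q \<Xi> p E * \<kappa>' (\<lambda>k. \<Xi> (inv J k)) R p E /
             complex_of_real (\<Omega> (p + (\<Sum>i<Suc k'. \<Xi> i)) + E + (\<Sum>i<Suc k'. \<omega> (\<Xi> i))) \<partial>Rnd (Suc k')))"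
        unfolding full_contraction_def nk by (rule norm_sum)
      also have "\<dots> \<le> (\<Sum>J\<in>{J. J permutes {..<Suc k'}}. A1 * A2 * K ^ Suc k' * E powr (-S))"
        by (intro sum_mono Jb) auto
      also have "\<dots> = real (card {J. J permutes {..<Suc k'}}) * (A1 * A2 * K ^ Suc k' * E powr (-S))"
        by (rule sum_constant)
      also have "card {J. J permutes {..<Suc k'}} = fact (Suc k')"
        by (rule card_permutations) simp_all
      also have "real (fact (Suc k')) * (A1 * A2 * K ^ Suc k' * E powr (-S)) = fact n * (A1 * A2 * K ^ n * E powr (-S))"
        unfolding nk of_nat_fact by (rule refl)
      also have "\<dots> = B0 * (E powr (-\<mu>) * E powr (-\<mu>') * E powr (-S)) * ?F t"
        by (simp add: B0_def A1_def A2_def mult_ac)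
      also have "\<dots> \<le> B0 * E powr (-\<tau>) * ?F t"
      proof -
        have "E powr (-\<mu>) * E powr (-\<mu>') * E powr (-S) = E powr (-(\<mu> + \<mu>' + S))"
          by (simp add: powr_add[symmetric])
        also have "\<dots> \<le> E powr (-\<tau>)"
        proof (rule powr_mono)
          have "lam + lam' + real n * (1 - delta \<alpha> \<gamma> TYPE('d) / real \<gamma>) - 1 = S + \<sigma> - 1"
            by (simp add: S_def L_def \<theta>_def)
          then have "\<tau> = \<mu> + \<mu>' + max (S + \<sigma> - 1) 0" by (simp add: \<tau>_def)
          then show "- (\<mu> + \<mu>' + S) \<le> - \<tau>" using Spos \<sigma>(2) by simp
        qed (use E in auto)
        finally show ?thesis using B0nn Fnn[of t] by (intro mult_right_mono mult_left_mono) auto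
      qed
      finally show ?thesis .
    qed
    have key2: "cmod (full_contraction \<omega> \<Omega> n \<kappa> \<kappa>' Q R p E) / (c * E powr (-\<tau>)) \<le> ?F t"
      if t: "t \<in> {\<sigma>-1..1-\<sigma>}" for t
    proof -
      have cpos: "c * E powr (-\<tau>) > 0" using B0nn Epos by (simp add: c_def)
      have "B0 * E powr (-\<tau>) * ?F t \<le> c * E powr (-\<tau>) * ?F t"
        using Fnn[of t] by (intro mult_right_mono) (auto simp: c_def)
      then have "cmod (full_contraction \<omega> \<Omega> n \<kappa> \<kappa>' Q R p E) \<le> c * E powr (-\<tau>) * ?F t"
        using key[OF t] by linarith
      then show ?thesis using cpos by (simp add: divide_le_eq mult.commute)
    qed
    have "cmod (full_contraction \<omega> \<Omega> n \<kappa> \<kappa>' Q R p E) / (c * E powr (-\<tau>)) \<le> (INF t\<in>{\<sigma>-1..1-\<sigma>}. ?F t)"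
      using \<sigma>(2) by (intro cINF_greatest key2) auto
    moreover have "c * E powr (-\<tau>) > 0" using B0nn Epos by (simp add: c_def)
    ultimately have "cmod (full_contraction \<omega> \<Omega> n \<kappa> \<kappa>' Q R p E) \<le> c * E powr (-\<tau>) * (INF t\<in>{\<sigma>-1..1-\<sigma>}. ?F t)"
      by (simp add: divide_le_eq mult.commute)
    then show "cmod (full_contraction \<omega> \<Omega> n \<kappa> \<kappa>' Q R p E) \<le>
        c * E powr (- (\<mu> + \<mu>' + max (lam + lam' + real n * (1 - delta \<alpha> \<gamma> TYPE('d) / real \<gamma>) - 1) 0))
          * (INF s\<in>{\<sigma>-1..1-\<sigma>}. rho v \<omega> n (\<sigma> + s) Q E * rho_tilde v \<omega> n (\<sigma> - s) R E)"
      by (simp add: \<tau>_def)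
  qed
qed

end
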